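(* There is an algorithm which, given a propositional Hilbert-type calculus $\mathbf{C}$ and a positive integer $m$, computes all $m$-valued covers $\mathbf{M}$ of $\mathbf{C}$ with $V(\mathbf{M})=\{1,\ldots,m\}$ that are minimal with respect to $\lhd$ among such covers (i.e., there is no $m$-valued cover $\mathbf{M}'$ of $\mathbf{C}$ with $V(\mathbf{M}')=\{1,\ldots,m\}$ and $\mathbf{M}'\lhd\mathbf{M}$).
   Context: A propositional language has variables $X_1,X_2,\ldots$ and finitely many connectives with arities. A propositional Hilbert-type calculus $\mathbf{C}$ is given by a finite set of axioms (formulas) and a finite set of rules, each consisting of finitely many premise formulas and a conclusion formula. An $m$-valued logic $\mathbf{M}$ is given by a set $V(\mathbf{M})$ of $m$ truth values, designated values $V^+(\mathbf{M})\subseteq V(\mathbf{M})$, and a truth function for each connective; valuations map variables to truth values and extend to formulas; a valuation satisfies $F$ if $F$ gets a designated value; a tautology is a formula satisfied by every valuation; $\mathrm{Taut}(\mathbf{M})$ is the set of tautologies. $\mathbf{M}$ is a cover for $\mathbf{C}$ ($\mathbf{C}$ is strongly sound for $\mathbf{M}$) if every axiom of $\mathbf{C}$ is a tautology of $\mathbf{M}$ and, for every rule of $\mathbf{C}$, every valuation satisfying all premises satisfies the conclusion. $\mathbf{M}_1\lhd\mathbf{M}_2$ means $\mathrm{Taut}(\mathbf{M}_1)\subsetneq\mathrm{Taut}(\mathbf{M}_2)$. *)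

theory Defs
  imports Main "HOL-Library.Nat_Bijection"
begin

datatype recf = Z | S | Id nat | Cn recf "recf list" | Pr recf recf | Mn recf

inductive rf_eval :: "recf \<Rightarrow> nat list \<Rightarrow> nat \<Rightarrow> bool" where
  rf_Z: "rf_eval Z xs 0"
| rf_S: "rf_eval S (x # xs) (Suc x)"
| rf_Id: "i < length xs \<Longrightarrow> rf_eval (Id i) xs (xs ! i)"
| rf_Cn: "list_all2 (\<lambda>g y. rf_eval g xs y) gs ys \<Longrightarrow> rf_eval f ys z \<Longrightarrow> rf_eval (Cn f gs) xs z"
| rf_Pr0: "rf_eval f xs z \<Longrightarrow> rf_eval (Pr f g) (0 # xs) z"
| rf_PrS: "rf_eval (Pr f g) (n # xs) r \<Longrightarrow> rf_eval g (r # n # xs) z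
           \<Longrightarrow> rf_eval (Pr f g) (Suc n # xs) z"
| rf_Mn: "rf_eval f (n # xs) 0 \<Longrightarrow> (\<forall>k<n. \<exists>v. v > 0 \<and> rf_eval f (k # xs) v)
           \<Longrightarrow> rf_eval (Mn f) xs n"

text \<open>A language is given by the list of arities of its connectives (connective c has
arity ar ! c, for c < length ar). Variables X_1, X_2, ... are Var 0, Var 1, ...\<close>

datatype form = Var nat | App nat "form list"

fun wf_form :: "nat list \<Rightarrow> form \<Rightarrow> bool" where
  "wf_form ar (Var n) = True"
| "wf_form ar (App c fs) = (c < length ar \<and> length fs = ar ! c \<and> (\<forall>f\<in>set fs. wf_form ar f))"

definition wf_calc :: "nat list \<Rightarrow> form list \<Rightarrow> (form list \<times> form) list \<Rightarrow> bool" where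
  "wf_calc ar axs rls \<longleftrightarrow> (\<forall>a\<in>set axs. wf_form ar a) \<and>
     (\<forall>(ps, c)\<in>set rls. (\<forall>p\<in>set ps. wf_form ar p) \<and> wf_form ar c)"

text \<open>A logic is a pair (designated values, truth functions); truth function of connective c
applied to the argument list.\<close>

type_synonym logic = "nat set \<times> (nat \<Rightarrow> nat list \<Rightarrow> nat)"

definition is_logic :: "nat list \<Rightarrow> nat \<Rightarrow> logic \<Rightarrow> bool" where
  "is_logic ar m M \<longleftrightarrow> fst M \<subseteq> {1..m} \<and>
     (\<forall>c<length ar. \<forall>args. length args = ar ! c \<and> set args \<subseteq> {1..m} \<longrightarrow> snd M c args \<in> {1..m})"

fun evalf :: "(nat \<Rightarrow> nat list \<Rightarrow> nat) \<Rightarrow> (nat \<Rightarrow> nat) \<Rightarrow> form \<Rightarrow> nat" where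
  "evalf F v (Var n) = v n"
| "evalf F v (App c fs) = F c (map (evalf F v) fs)"

definition valuation :: "nat \<Rightarrow> (nat \<Rightarrow> nat) \<Rightarrow> bool" where
  "valuation m v \<longleftrightarrow> (\<forall>n. v n \<in> {1..m})"

definition satisfies :: "logic \<Rightarrow> (nat \<Rightarrow> nat) \<Rightarrow> form \<Rightarrow> bool" where
  "satisfies M v F \<longleftrightarrow> evalf (snd M) v F \<in> fst M"

definition Taut :: "nat list \<Rightarrow> nat \<Rightarrow> logic \<Rightarrow> form set" where
  "Taut ar m M = {F. wf_form ar F \<and> (\<forall>v. valuation m v \<longrightarrow> satisfies M v F)}"

definition is_cover :: "nat list \<Rightarrow> nat \<Rightarrow> form list \<Rightarrow> (form list \<times> form) list \<Rightarrow> logic \<Rightarrow> bool" where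
  "is_cover ar m axs rls M \<longleftrightarrow> (\<forall>a\<in>set axs. a \<in> Taut ar m M) \<and>
     (\<forall>(ps, c)\<in>set rls. \<forall>v. valuation m v \<longrightarrow> (\<forall>p\<in>set ps. satisfies M v p) \<longrightarrow> satisfies M v c)"

definition lhd :: "nat list \<Rightarrow> nat \<Rightarrow> logic \<Rightarrow> logic \<Rightarrow> bool" where
  "lhd ar m M1 M2 \<longleftrightarrow> Taut ar m M1 \<subset> Taut ar m M2"

definition minimal_cover :: "nat list \<Rightarrow> nat \<Rightarrow> form list \<Rightarrow> (form list \<times> form) list \<Rightarrow> logic \<Rightarrow> bool" where
  "minimal_cover ar m axs rls M \<longleftrightarrow> is_logic ar m M \<and> is_cover ar m axs rls M \<and>
     \<not> (\<exists>M'. is_logic ar m M' \<and> is_cover ar m axs rls M' \<and> lhd ar m M' M)"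

definition same_logic :: "nat list \<Rightarrow> nat \<Rightarrow> logic \<Rightarrow> logic \<Rightarrow> bool" where
  "same_logic ar m M M' \<longleftrightarrow> fst M = fst M' \<and>
     (\<forall>c<length ar. \<forall>args. length args = ar ! c \<and> set args \<subseteq> {1..m} \<longrightarrow> snd M c args = snd M' c args)"

fun enc_form :: "form \<Rightarrow> nat" where
  "enc_form (Var n) = prod_encode (0, n)"
| "enc_form (App c fs) = prod_encode (1, prod_encode (c, list_encode (map enc_form fs)))"

definition enc_rule :: "form list \<times> form \<Rightarrow> nat" where
  "enc_rule r = prod_encode (list_encode (map enc_form (fst r)), enc_form (snd r))"

definition enc_input :: "nat list \<Rightarrow> form list \<Rightarrow> (form list \<times> form) list \<Rightarrow> nat \<Rightarrow> nat" where
  "enc_input ar axs rls m = list_encode [list_encode ar, list_encode (map enc_form axs),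
      list_encode (map enc_rule rls), m]"

text \<open>A finite description of a logic: list of designated values and a finite truth table
((connective, arguments), value).\<close>

type_synonym logic_code = "nat list \<times> ((nat \<times> nat list) \<times> nat) list"

definition logic_of_code :: "logic_code \<Rightarrow> logic" where
  "logic_of_code k = (set (fst k),
     (\<lambda>c args. case map_of (snd k) (c, args) of Some y \<Rightarrow> y | None \<Rightarrow> 1))"

definition enc_entry :: "(nat \<times> nat list) \<times> nat \<Rightarrow> nat" where
  "enc_entry e = prod_encode (prod_encode (fst (fst e), list_encode (snd (fst e))), snd e)"

definition enc_code :: "logic_code \<Rightarrow> nat" where
  "enc_code k = prod_encode (list_encode (fst k), list_encode (map enc_entry (snd k)))"

end

theory Submission
  imports Defs "HOL-Library.FuncSet"
begin


definition c1 :: "(nat \<Rightarrow> nat) \<Rightarrow> bool" where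
  "c1 f \<longleftrightarrow> (\<exists>p. \<forall>x. rf_eval p [x] (f x))"
definition c2 :: "(nat \<Rightarrow> nat \<Rightarrow> nat) \<Rightarrow> bool" where
  "c2 f \<longleftrightarrow> (\<exists>p. \<forall>x y. rf_eval p [x,y] (f x y))"

lemma c1_id: "c1 (\<lambda>x. x)"
proof -
  have "rf_eval (Id 0) [x] x" for x using rf_Id[of 0 "[x]"] by simp
  then show ?thesis unfolding c1_def by blast
qed

lemma c1_const: "c1 (\<lambda>x. c)"
proof (induction c)
  case 0 then show ?case unfolding c1_def using rf_Z by blast
next
  case (Suc c)
  then obtain p where p: "\<forall>x. rf_eval p [x] c" unfolding c1_def by blast
  have "rf_eval (Cn S [p]) [x] (Suc c)" for x
    by (rule rf_Cn[where ys="[c]"]) (auto simp: p rf_S)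
  then show ?case unfolding c1_def by blast
qed

lemma c1_Suc: "c1 f \<Longrightarrow> c1 (\<lambda>x. Suc (f x))"
proof -
  assume "c1 f"
  then obtain p where p: "\<forall>x. rf_eval p [x] (f x)" unfolding c1_def by blast
  have "rf_eval (Cn S [p]) [x] (Suc (f x))" for x
    by (rule rf_Cn[where ys="[f x]"]) (auto simp: p rf_S)
  then show ?thesis unfolding c1_def by blast
qed

lemma c1_c2: "c2 h \<Longrightarrow> c1 f \<Longrightarrow> c1 g \<Longrightarrow> c1 (\<lambda>x. h (f x) (g x))"
proof -
  assume "c2 h" "c1 f" "c1 g"
  then obtain ph pf pg where ph: "\<forall>x y. rf_eval ph [x,y] (h x y)"
    and pf: "\<forall>x. rf_eval pf [x] (f x)" and pg: "\<forall>x. rf_eval pg [x] (g x)"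
    unfolding c1_def c2_def by blast
  have "rf_eval (Cn ph [pf,pg]) [x] (h (f x) (g x))" for x
    by (rule rf_Cn[where ys="[f x, g x]"]) (auto simp: ph pf pg)
  then show ?thesis unfolding c1_def by blast
qed

lemma c2_c2: "c2 h \<Longrightarrow> c2 f \<Longrightarrow> c2 g \<Longrightarrow> c2 (\<lambda>x y. h (f x y) (g x y))"
proof -
  assume "c2 h" "c2 f" "c2 g"
  then obtain ph pf pg where ph: "\<forall>x y. rf_eval ph [x,y] (h x y)"
    and pf: "\<forall>x y. rf_eval pf [x,y] (f x y)" and pg: "\<forall>x y. rf_eval pg [x,y] (g x y)"
    unfolding c2_def by blast
  have "rf_eval (Cn ph [pf,pg]) [x,y] (h (f x y) (g x y))" for x y
    by (rule rf_Cn[where ys="[f x y, g x y]"]) (auto simp: ph pf pg)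
  then show ?thesis unfolding c2_def by blast
qed

lemma c2_c1: "c1 h \<Longrightarrow> c2 f \<Longrightarrow> c2 (\<lambda>x y. h (f x y))"
proof -
  assume "c1 h" "c2 f"
  then obtain ph pf where ph: "\<forall>x. rf_eval ph [x] (h x)"
    and pf: "\<forall>x y. rf_eval pf [x,y] (f x y)"
    unfolding c1_def c2_def by blast
  have "rf_eval (Cn ph [pf]) [x,y] (h (f x y))" for x y
    by (rule rf_Cn[where ys="[f x y]"]) (auto simp: ph pf)
  then show ?thesis unfolding c2_def by blast
qed

lemma c2_fst: "c2 (\<lambda>x y. x)"
proof -
  have "rf_eval (Id 0) [x,y] x" for x y using rf_Id[of 0 "[x,y]"] by simp
  then show ?thesis unfolding c2_def by blast
qed

lemma c2_snd: "c2 (\<lambda>x y. y)"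
proof -
  have "rf_eval (Id 1) [x,y] y" for x y using rf_Id[of 1 "[x,y]"] by simp
  then show ?thesis unfolding c2_def by blast
qed

fun prim :: "(nat \<Rightarrow> nat) \<Rightarrow> (nat \<Rightarrow> nat \<Rightarrow> nat) \<Rightarrow> nat \<Rightarrow> nat \<Rightarrow> nat" where
  "prim g h 0 x = g x"
| "prim g h (Suc n) x = h (prim g h n x) n"

lemma c2_prim: "c1 g \<Longrightarrow> c2 h \<Longrightarrow> c2 (prim g h)"
proof -
  assume "c1 g" "c2 h"
  then obtain pg ph where ph: "\<forall>x y. rf_eval ph [x,y] (h x y)"
    and pg: "\<forall>x. rf_eval pg [x] (g x)"
    unfolding c1_def c2_def by blast
  have i0: "rf_eval (Id 0) [a,b,c] a" for a b c using rf_Id[of 0 "[a,b,c]"] by simp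
  have i1: "rf_eval (Id (Suc 0)) [a,b,c] b" for a b c using rf_Id[of "Suc 0" "[a,b,c]"] by simp
  have hh: "rf_eval (Cn ph [Id 0, Id (Suc 0)]) [r,n,x] (h r n)" for r n x
    by (rule rf_Cn[where ys="[r,n]"]) (auto simp: ph i0 i1)
  have "rf_eval (Pr pg (Cn ph [Id 0, Id (Suc 0)])) [n,x] (prim g h n x)" for n x
  proof (induction n)
    case 0 then show ?case by (simp add: rf_Pr0 pg)
  next
    case (Suc n) then show ?case using rf_PrS[OF Suc hh] by simp
  qed
  then show ?thesis unfolding c2_def by blast
qed

lemma c1_from_c2: "c2 h \<Longrightarrow> c1 f \<Longrightarrow> c1 (\<lambda>x. h (f x) c)"
  using c1_c2 c1_const by blast


lemma c2_const: "c2 (\<lambda>x y. c)" using c2_c1[OF c1_const c2_fst] .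

lemma c2_ext: "c2 g \<Longrightarrow> (\<And>n x. g n x = f n x) \<Longrightarrow> c2 f"
proof -
  assume "c2 g" "\<And>n x. g n x = f n x"
  then have "g = f" by (intro ext) auto
  with \<open>c2 g\<close> show ?thesis by simp
qed

lemma c2_add: "c2 (\<lambda>n x. n + x)"
proof -
  have "prim (\<lambda>x. x) (\<lambda>r k. Suc r) n x = n + x" for n x by (induction n) auto
  moreover have "c2 (prim (\<lambda>x. x) (\<lambda>r k. Suc r))"
    by (intro c2_prim c1_id c2_c1[OF c1_Suc[OF c1_id]] c2_fst)
  ultimately show ?thesis by (rule c2_ext[rotated])
qed

lemma c1_pred: "c1 (\<lambda>n. n - 1)"
proof -
  have "prim (\<lambda>x. 0) (\<lambda>r k. k) n x = n - 1" for n x by (induction n) auto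
  moreover have "c2 (prim (\<lambda>x. 0) (\<lambda>r k. k))"
    by (intro c2_prim c1_const c2_snd)
  ultimately have "c2 (\<lambda>n x. n - 1)" by (rule c2_ext[rotated])
  from c1_from_c2[OF this c1_id] show ?thesis .
qed

lemma c2_sub: "c2 (\<lambda>n a. a - n)"
proof -
  have "prim (\<lambda>x. x) (\<lambda>r k. r - 1) n x = x - n" for n x by (induction n) auto
  moreover have "c2 (prim (\<lambda>x. x) (\<lambda>r k. r - 1))"
    by (intro c2_prim c1_id c2_c1[OF c1_pred] c2_fst)
  ultimately show ?thesis by (rule c2_ext[rotated])
qed

lemma c2_tri: "c2 (\<lambda>n x. triangle n)"
proof -
  have "prim (\<lambda>x. 0) (\<lambda>r k. r + Suc k) n x = triangle n" for n x by (induction n) auto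
  moreover have "c2 (prim (\<lambda>x. 0) (\<lambda>r k. r + Suc k))"
    by (intro c2_prim c1_const c2_c2[OF c2_add] c2_fst c2_c1[OF c1_Suc[OF c1_id]] c2_snd)
  ultimately show ?thesis by (rule c2_ext[rotated])
qed

lemma c1_tri: "c1 triangle"
  using c1_from_c2[OF c2_tri c1_id] by simp

lemma c2_le: "c2 (\<lambda>a b. 1 - (a - b))"
  by (rule c2_c2[OF c2_sub c2_c2[OF c2_sub c2_snd c2_fst] c2_const])

definition sroot :: "nat \<Rightarrow> nat" where
  "sroot n = prim (\<lambda>x. 0) (\<lambda>r k. r + (1 - (triangle (Suc r) - Suc k))) n 0"

lemma sroot_0: "sroot 0 = 0" by (simp add: sroot_def)
lemma sroot_Suc: "sroot (Suc n) = sroot n + (1 - (triangle (Suc (sroot n)) - Suc n))"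
  by (simp add: sroot_def)

lemma sroot_bounds: "triangle (sroot n) \<le> n \<and> n < triangle (Suc (sroot n))"
proof (induction n)
  case 0 then show ?case by (simp add: sroot_0)
next
  case (Suc n)
  show ?case
  proof (cases "triangle (Suc (sroot n)) \<le> Suc n")
    case True
    then have "sroot (Suc n) = Suc (sroot n)" by (simp add: sroot_Suc)
    with True Suc show ?thesis by simp
  next
    case False
    then have "sroot (Suc n) = sroot n" by (simp add: sroot_Suc)
    with False Suc show ?thesis by simp
  qed
qed

lemma c1_sroot: "c1 sroot"
proof -
  have "c2 (prim (\<lambda>x. 0) (\<lambda>r k. r + (1 - (triangle (Suc r) - Suc k))))"
    apply (intro c2_prim c1_const)
    apply (rule c2_c2[OF c2_add c2_fst])
    apply (rule c2_c2[OF c2_le])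
     apply (rule c2_c1[OF c1_tri])
     apply (rule c2_c1[OF c1_Suc[OF c1_id] c2_fst])
    apply (rule c2_c1[OF c1_Suc[OF c1_id] c2_snd])
    done
  from c1_from_c2[OF this c1_id] show ?thesis unfolding sroot_def[abs_def] by simp
qed

definition pr :: "nat \<Rightarrow> nat \<Rightarrow> nat" where "pr a b = prod_encode (a, b)"
definition p1 :: "nat \<Rightarrow> nat" where "p1 n = fst (prod_decode n)"
definition p2 :: "nat \<Rightarrow> nat" where "p2 n = snd (prod_decode n)"

lemma pr_p1[simp]: "p1 (pr a b) = a" by (simp add: pr_def p1_def)
lemma pr_p2[simp]: "p2 (pr a b) = b" by (simp add: pr_def p2_def)
lemma pr_surj[simp]: "pr (p1 n) (p2 n) = n" by (simp add: pr_def p1_def p2_def)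
lemma pr_inj[simp]: "pr a b = pr c d \<longleftrightarrow> a = c \<and> b = d" by (simp add: pr_def)

lemma decode_explicit: "prod_decode n = (n - triangle (sroot n), sroot n - (n - triangle (sroot n)))"
proof -
  let ?s = "sroot n"
  have b: "triangle ?s \<le> n" "n < triangle ?s + Suc ?s" using sroot_bounds[of n] by auto
  have "prod_encode (n - triangle ?s, ?s - (n - triangle ?s)) = n"
    using b by (simp add: prod_encode_def)
  then show ?thesis by (metis prod_encode_inverse)
qed

lemma p1_explicit: "p1 n = n - triangle (sroot n)" by (simp add: p1_def decode_explicit)
lemma p2_explicit: "p2 n = sroot n - (n - triangle (sroot n))" by (simp add: p2_def decode_explicit)

lemma c1_p1_base: "c1 p1"
proof -
  have "c1 (\<lambda>n. n - triangle (sroot n))"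
    by (rule c1_c2[OF c2_sub]) (rule c1_c2[OF c2_tri c1_sroot c1_id], rule c1_id)
  then show ?thesis by (simp add: p1_explicit[abs_def])
qed

lemma c1_p2_base: "c1 p2"
proof -
  have "c1 (\<lambda>n. n - triangle (sroot n))"
    by (rule c1_c2[OF c2_sub]) (rule c1_c2[OF c2_tri c1_sroot c1_id], rule c1_id)
  then have "c1 (\<lambda>n. sroot n - (n - triangle (sroot n)))"
    by (rule c1_c2[OF c2_sub _ c1_sroot])
  then show ?thesis by (simp add: p2_explicit[abs_def])
qed

lemma c2_pr: "c2 pr"
proof -
  have "c2 (\<lambda>a b. triangle (a + b) + a)"
    by (rule c2_c2[OF c2_add c2_c2[OF c2_tri c2_add c2_const] c2_fst])
  then show ?thesis by (simp add: pr_def[abs_def] prod_encode_def)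
qed

lemma c2I: "c1 (\<lambda>y. h (p1 y) (p2 y)) \<Longrightarrow> c2 h"
proof -
  assume "c1 (\<lambda>y. h (p1 y) (p2 y))"
  then have "c2 (\<lambda>a b. (\<lambda>y. h (p1 y) (p2 y)) (pr a b))" by (rule c2_c1[OF _ c2_pr])
  then show ?thesis by simp
qed

lemma c1_comp: "c1 g \<Longrightarrow> c1 f \<Longrightarrow> c1 (\<lambda>x. g (f x))"
proof -
  assume "c1 g" "c1 f"
  then have "c2 (\<lambda>a b. g a)" using c2_c1 c2_fst by blast
  from c1_c2[OF this \<open>c1 f\<close> c1_id] show ?thesis .
qed

lemma c1_bin: "c1 (\<lambda>y. h (p1 y) (p2 y)) \<Longrightarrow> c1 f \<Longrightarrow> c1 g \<Longrightarrow> c1 (\<lambda>x. h (f x) (g x))"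
  using c1_c2 c2I by blast


lemma c1_add: "c1 f \<Longrightarrow> c1 g \<Longrightarrow> c1 (\<lambda>x. f x + g x)"
  by (rule c1_c2[OF c2_add])
lemma c1_sub: "c1 f \<Longrightarrow> c1 g \<Longrightarrow> c1 (\<lambda>x. f x - g x)"
  by (rule c1_c2[OF c2_sub])
lemma c1_pr: "c1 f \<Longrightarrow> c1 g \<Longrightarrow> c1 (\<lambda>x. pr (f x) (g x))"
  by (rule c1_c2[OF c2_pr])
lemma c1_p1: "c1 f \<Longrightarrow> c1 (\<lambda>x. p1 (f x))"
  by (rule c1_comp[OF c1_p1_base])
lemma c1_p2: "c1 f \<Longrightarrow> c1 (\<lambda>x. p2 (f x))"
  by (rule c1_comp[OF c1_p2_base])
lemma c1_Suc': "c1 f \<Longrightarrow> c1 (\<lambda>x. Suc (f x))" by (rule c1_Suc)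

lemma c2_iter: "c1 f \<Longrightarrow> c2 (\<lambda>n a. (f ^^ n) a)"
proof -
  assume f: "c1 f"
  have "c2 (prim (\<lambda>a. a) (\<lambda>r k. f r))"
    by (rule c2_prim[OF c1_id c2_c1[OF f c2_fst]])
  moreover have "prim (\<lambda>a. a) (\<lambda>r k. f r) n a = (f ^^ n) a" for n a by (induction n) auto
  ultimately show ?thesis by (rule c2_ext)
qed

lemma c1_iter: "c1 f \<Longrightarrow> c1 N \<Longrightarrow> c1 A \<Longrightarrow> c1 (\<lambda>x. (f ^^ N x) (A x))"
  by (rule c1_c2[OF c2_iter])

lemma c1_mult: "c1 f \<Longrightarrow> c1 g \<Longrightarrow> c1 (\<lambda>x. f x * g x)"
proof -
  assume f: "c1 f" and g: "c1 g"
  let ?st = "\<lambda>s. pr (p1 s) (p2 s + p1 s)"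
  have it: "(?st ^^ n) (pr a 0) = pr a (n * a)" for n a by (induction n) auto
  have "c1 (\<lambda>x. p2 ((?st ^^ f x) (pr (g x) 0)))"
    by (intro c1_p2 c1_iter f c1_pr c1_add c1_p1 c1_id g c1_const)
  then show ?thesis by (simp add: it mult.commute)
qed

definition cp :: "(nat \<Rightarrow> bool) \<Rightarrow> bool" where
  "cp P \<longleftrightarrow> c1 (\<lambda>x. if P x then 1 else 0)"

lemma c1_ext: "c1 g \<Longrightarrow> (\<And>x. g x = f x) \<Longrightarrow> c1 f"
proof -
  assume "c1 g" "\<And>x. g x = f x"
  then have "g = f" by (intro ext) auto
  with \<open>c1 g\<close> show ?thesis by simp
qed

lemma cp_ext: "cp P \<Longrightarrow> (\<And>x. P x = Q x) \<Longrightarrow> cp Q"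
  unfolding cp_def by (erule c1_ext) simp

lemma cp_const: "cp (\<lambda>x. b)" unfolding cp_def by (rule c1_const)

lemma cp_eq: "c1 f \<Longrightarrow> c1 g \<Longrightarrow> cp (\<lambda>x. f x = g x)"
proof -
  assume a: "c1 f" "c1 g"
  have "c1 (\<lambda>x. 1 - ((f x - g x) + (g x - f x)))" by (intro c1_sub c1_const c1_add a)
  then show ?thesis unfolding cp_def by (rule c1_ext) auto
qed

lemma cp_le: "c1 f \<Longrightarrow> c1 g \<Longrightarrow> cp (\<lambda>x. f x \<le> g x)"
proof -
  assume a: "c1 f" "c1 g"
  have "c1 (\<lambda>x. 1 - (f x - g x))" by (intro c1_sub c1_const a)
  then show ?thesis unfolding cp_def by (rule c1_ext) auto
qed

lemma cp_less: "c1 f \<Longrightarrow> c1 g \<Longrightarrow> cp (\<lambda>x. f x < g x)"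
proof -
  assume a: "c1 f" "c1 g"
  have "c1 (\<lambda>x. 1 - (Suc (f x) - g x))" by (intro c1_sub c1_const c1_Suc a)
  then show ?thesis unfolding cp_def by (rule c1_ext) auto
qed

lemma cp_not: "cp P \<Longrightarrow> cp (\<lambda>x. \<not> P x)"
proof -
  assume a: "cp P"
  have "c1 (\<lambda>x. 1 - (if P x then 1 else 0))" using a unfolding cp_def by (intro c1_sub c1_const)
  then show ?thesis unfolding cp_def by (rule c1_ext) auto
qed

lemma cp_and: "cp P \<Longrightarrow> cp Q \<Longrightarrow> cp (\<lambda>x. P x \<and> Q x)"
proof -
  assume a: "cp P" "cp Q"
  have "c1 (\<lambda>x. (if P x then 1 else 0) + (if Q x then 1 else 0) - 1)"
    using a unfolding cp_def by (intro c1_sub c1_const c1_add)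
  then show ?thesis unfolding cp_def by (rule c1_ext) auto
qed

lemma cp_or: "cp P \<Longrightarrow> cp Q \<Longrightarrow> cp (\<lambda>x. P x \<or> Q x)"
proof -
  assume a: "cp P" "cp Q"
  have "cp (\<lambda>x. \<not> (\<not> P x \<and> \<not> Q x))" by (intro cp_not cp_and a)
  then show ?thesis by (rule cp_ext) auto
qed

lemma cp_imp: "cp P \<Longrightarrow> cp Q \<Longrightarrow> cp (\<lambda>x. P x \<longrightarrow> Q x)"
proof -
  assume a: "cp P" "cp Q"
  have "cp (\<lambda>x. \<not> P x \<or> Q x)" by (intro cp_not cp_or a)
  then show ?thesis by (rule cp_ext) auto
qed

lemma cp_iff: "cp P \<Longrightarrow> cp Q \<Longrightarrow> cp (\<lambda>x. P x \<longleftrightarrow> Q x)"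
proof -
  assume a: "cp P" "cp Q"
  have "cp (\<lambda>x. (P x \<longrightarrow> Q x) \<and> (Q x \<longrightarrow> P x))" by (intro cp_and cp_imp a)
  then show ?thesis by (rule cp_ext) auto
qed

lemma c1_if: "cp P \<Longrightarrow> c1 f \<Longrightarrow> c1 g \<Longrightarrow> c1 (\<lambda>x. if P x then f x else g x)"
proof -
  assume a: "cp P" "c1 f" "c1 g"
  have "c1 (\<lambda>x. (if P x then 1 else 0) * f x + (1 - (if P x then 1 else 0)) * g x)"
    using a unfolding cp_def by (intro c1_add c1_mult c1_sub c1_const)
  then show ?thesis by (rule c1_ext) auto
qed

lemma c1_sum: "c1 (\<lambda>y. f (p1 y) (p2 y)) \<Longrightarrow> c1 N \<Longrightarrow> c1 (\<lambda>x. \<Sum>i<N x. f i x)"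
proof -
  assume f: "c1 (\<lambda>y. f (p1 y) (p2 y))" and N: "c1 N"
  let ?st = "\<lambda>s. pr (p1 s) (pr (Suc (p1 (p2 s))) (p2 (p2 s) + f (p1 (p2 s)) (p1 s)))"
  have it: "(?st ^^ n) (pr x (pr 0 0)) = pr x (pr n (\<Sum>i<n. f i x))" for n x
    by (induction n) auto
  have st: "c1 ?st"
    by (intro c1_pr c1_p1 c1_id c1_Suc c1_add c1_p2 c1_bin[OF f] c1_p1[OF c1_p2[OF c1_id]])
  have "c1 (\<lambda>x. p2 (p2 ((?st ^^ N x) (pr x (pr 0 0)))))"
    by (intro c1_p2 c1_iter[OF st N] c1_pr c1_id c1_const)
  then show ?thesis by (simp add: it)
qed

lemma cp_all: "cp (\<lambda>y. P (p1 y) (p2 y)) \<Longrightarrow> c1 N \<Longrightarrow> cp (\<lambda>x. \<forall>i<N x. P i x)"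
proof -
  assume P: "cp (\<lambda>y. P (p1 y) (p2 y))" and N: "c1 N"
  have "c1 (\<lambda>y. 1 - (if P (p1 y) (p2 y) then 1 else 0))"
    using P unfolding cp_def by (intro c1_sub c1_const)
  then have "c1 (\<lambda>x. \<Sum>i<N x. (1::nat) - (if P i x then 1 else 0))"
    by (rule c1_sum[OF _ N])
  then have "cp (\<lambda>x. (\<Sum>i<N x. (1::nat) - (if P i x then 1 else 0)) = 0)"
    by (rule cp_eq[OF _ c1_const])
  then show ?thesis by (rule cp_ext) auto
qed

lemma cp_ex: "cp (\<lambda>y. P (p1 y) (p2 y)) \<Longrightarrow> c1 N \<Longrightarrow> cp (\<lambda>x. \<exists>i<N x. P i x)"
proof -
  assume P: "cp (\<lambda>y. P (p1 y) (p2 y))" and N: "c1 N"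
  have "cp (\<lambda>x. \<not> (\<forall>i<N x. \<not> P i x))"
    by (rule cp_not[OF cp_all[OF cp_not[OF P] N]])
  then show ?thesis by (rule cp_ext) auto
qed

lemma c1_of_bool: "cp P \<Longrightarrow> c1 (\<lambda>x. if P x then 1 else 0)" unfolding cp_def .


lemma cp_bin: "cp (\<lambda>y. P (p1 y) (p2 y)) \<Longrightarrow> c1 f \<Longrightarrow> c1 g \<Longrightarrow> cp (\<lambda>x. P (f x) (g x))"
  unfolding cp_def by (rule c1_bin)

lemma cp_un: "cp P \<Longrightarrow> c1 f \<Longrightarrow> cp (\<lambda>x. P (f x))"
  unfolding cp_def by (rule c1_comp)

lemma c1_bin': "c1 (\<lambda>y. h (p1 y) (p2 y)) \<Longrightarrow> c1 f \<Longrightarrow> c1 g \<Longrightarrow> c1 (\<lambda>x. h (f x) (g x))"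
  by (rule c1_bin)

section \<open>List codes\<close>

definition ltl :: "nat \<Rightarrow> nat" where "ltl n = p2 (n - 1)"
definition lhdc :: "nat \<Rightarrow> nat" where "lhdc n = p1 (n - 1)"
definition ldrop :: "nat \<Rightarrow> nat \<Rightarrow> nat" where "ldrop i n = (ltl ^^ i) n"
definition lnth :: "nat \<Rightarrow> nat \<Rightarrow> nat" where "lnth n i = lhdc (ldrop i n)"
definition llen :: "nat \<Rightarrow> nat" where "llen n = (\<Sum>i<n. if ldrop i n = 0 then 0 else 1)"
definition lcons :: "nat \<Rightarrow> nat \<Rightarrow> nat" where "lcons a l = Suc (pr a l)"

lemma lcons_enc: "lcons a (list_encode xs) = list_encode (a # xs)"
  by (simp add: lcons_def pr_def)
lemma pr00: "pr 0 0 = 0" by (simp add: pr_def prod_encode_def)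
lemma p2_0[simp]: "p2 0 = 0" by (metis pr00 pr_p2)
lemma p1_0[simp]: "p1 0 = 0" by (metis pr00 pr_p1)
lemma ltl_enc[simp]: "ltl (list_encode xs) = list_encode (tl xs)"
  by (cases xs) (simp add: ltl_def, simp add: ltl_def p2_def)
lemma lhdc_enc[simp]: "lhdc (list_encode (x # xs)) = x"
  by (simp add: lhdc_def p1_def)
lemma ldrop_enc[simp]: "ldrop i (list_encode xs) = list_encode (drop i xs)"
  unfolding ldrop_def by (induction i arbitrary: xs) (auto simp: drop_Suc tl_drop funpow_swap1)
lemma lnth_enc[simp]: "i < length xs \<Longrightarrow> lnth (list_encode xs) i = xs ! i"
  unfolding lnth_def by (simp add: Cons_nth_drop_Suc[symmetric] del: list_encode.simps)
lemma list_encode_0_iff: "list_encode xs = 0 \<longleftrightarrow> xs = []"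
  by (cases xs) auto
lemma length_le_enc: "length xs \<le> list_encode xs"
  by (induction xs) (auto simp: le_SucI le_prod_encode_2 intro: le_trans[OF _ le_prod_encode_2])
lemma llen_enc[simp]: "llen (list_encode xs) = length xs"
proof -
  have "llen (list_encode xs) = (\<Sum>i<list_encode xs. if i < length xs then 1 else 0)"
    unfolding llen_def by (intro sum.cong) (auto simp: list_encode_0_iff)
  also have "\<dots> = card {i. i < list_encode xs \<and> i < length xs}"
    by (simp add: sum.If_cases Int_def)
  also have "{i. i < list_encode xs \<and> i < length xs} = {..<length xs}"
    using length_le_enc[of xs] by auto
  finally show ?thesis by simp
qed
lemma mem_lt_enc: "x \<in> set xs \<Longrightarrow> x < list_encode xs"
proof (induction xs)
  case (Cons a xs) then show ?case using le_prod_encode_1[of a "list_encode xs"]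
      le_prod_encode_2[of "list_encode xs" a] by auto
qed simp

lemma c1_ltl: "c1 f \<Longrightarrow> c1 (\<lambda>x. ltl (f x))"
  unfolding ltl_def by (intro c1_p2 c1_sub c1_const)
lemma c1_lhdc: "c1 f \<Longrightarrow> c1 (\<lambda>x. lhdc (f x))"
  unfolding lhdc_def by (intro c1_p1 c1_sub c1_const)
lemma c1_lcons: "c1 f \<Longrightarrow> c1 g \<Longrightarrow> c1 (\<lambda>x. lcons (f x) (g x))"
  unfolding lcons_def by (intro c1_Suc c1_pr)
lemma c1_ldrop: "c1 f \<Longrightarrow> c1 g \<Longrightarrow> c1 (\<lambda>x. ldrop (f x) (g x))"
  unfolding ldrop_def by (intro c1_iter c1_ltl c1_id)
lemma c1_lnth: "c1 f \<Longrightarrow> c1 g \<Longrightarrow> c1 (\<lambda>x. lnth (f x) (g x))"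
  unfolding lnth_def by (intro c1_lhdc c1_ldrop)
lemma c1_llen: "c1 f \<Longrightarrow> c1 (\<lambda>x. llen (f x))"
proof -
  assume f: "c1 f"
  have "c1 (\<lambda>y. if ldrop (p1 y) (p2 y) = 0 then 0 else 1)"
    by (intro c1_if cp_eq c1_ldrop c1_p1 c1_p2 c1_id c1_const)
  then have "c1 (\<lambda>n. \<Sum>i<n. if ldrop i n = 0 then 0 else 1)"
    by (rule c1_sum) (rule c1_id)
  then show ?thesis unfolding llen_def[abs_def] by (rule c1_comp[OF _ f])
qed

definition bmin :: "nat \<Rightarrow> (nat \<Rightarrow> bool) \<Rightarrow> nat" where
  "bmin N P = (\<Sum>i<N. if \<forall>j<Suc i. \<not> P j then 1 else 0)"

lemma sum_lt_ind: "i0 \<le> N \<Longrightarrow> (\<Sum>i<N. if i < i0 then 1 else (0::nat)) = i0"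
  by (induction N) (auto simp: less_Suc_eq_le)

lemma bmin_some:
  assumes "P i" "i < N" "\<forall>j<i. \<not> P j"
  shows "bmin N P = i"
proof -
  have "bmin N P = (\<Sum>k<N. if k < i then 1 else (0::nat))"
    unfolding bmin_def
  proof (intro sum.cong refl)
    fix k assume "k \<in> {..<N}"
    have "(\<forall>j<Suc k. \<not> P j) \<longleftrightarrow> k < i"
    proof
      assume h: "\<forall>j<Suc k. \<not> P j"
      show "k < i"
      proof (rule ccontr)
        assume "\<not> k < i" then have "i < Suc k" by simp
        with h assms(1) show False by blast
      qed
    next
      assume "k < i" then show "\<forall>j<Suc k. \<not> P j" using assms(3) by auto
    qed
    then show "(if \<forall>j<Suc k. \<not> P j then 1 else 0) = (if k < i then 1 else (0::nat))"
      by simp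
  qed
  then show ?thesis using sum_lt_ind assms by simp
qed

lemma bmin_none: "\<forall>i<N. \<not> P i \<Longrightarrow> bmin N P = N"
proof -
  assume a: "\<forall>i<N. \<not> P i"
  have "bmin N P = (\<Sum>k<N. if k < N then 1 else (0::nat))"
    unfolding bmin_def by (intro sum.cong refl) (use a in auto)
  then show ?thesis using sum_lt_ind by simp
qed

lemma c1_bmin: "cp (\<lambda>y. P (p1 y) (p2 y)) \<Longrightarrow> c1 N \<Longrightarrow> c1 (\<lambda>x. bmin (N x) (\<lambda>i. P i x))"
proof -
  assume P: "cp (\<lambda>y. P (p1 y) (p2 y))" and N: "c1 N"
  have "cp (\<lambda>y. \<forall>j<Suc (p1 y). \<not> P j (p2 y))"
    by (intro cp_all cp_not c1_Suc c1_p1 c1_id cp_bin[OF P] c1_p2)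
  then have "c1 (\<lambda>y. if \<forall>j<Suc (p1 y). \<not> P j (p2 y) then 1 else 0)"
    by (intro c1_if c1_const)
  then show ?thesis unfolding bmin_def by (rule c1_sum[OF _ N])
qed

definition lkfin :: "nat \<Rightarrow> nat \<Rightarrow> nat" where
  "lkfin T i = (if i < llen T then p2 (lnth T i) else 1)"

definition lookup :: "nat \<Rightarrow> nat \<Rightarrow> nat" where
  "lookup T key = lkfin T (bmin (llen T) (\<lambda>i. p1 (lnth T i) = key))"

lemma c1_lookup: "c1 f \<Longrightarrow> c1 g \<Longrightarrow> c1 (\<lambda>x. lookup (f x) (g x))"
proof -
  assume f: "c1 f" and g: "c1 g"
  have b: "c1 (\<lambda>y. bmin (llen (p1 y)) (\<lambda>i. p1 (lnth (p1 y) i) = p2 y))"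
  proof (rule c1_bmin)
    show "cp (\<lambda>z. p1 (lnth (p1 (p2 z)) (p1 z)) = p2 (p2 z))"
      by (intro cp_eq c1_p1 c1_p2 c1_lnth c1_id)
  qed (intro c1_llen c1_p1 c1_id)
  have lk: "c1 (\<lambda>y. lkfin (p1 y) (p2 y))"
    unfolding lkfin_def by (intro c1_if cp_less c1_p1 c1_p2 c1_id c1_llen c1_lnth c1_const)
  have "c1 (\<lambda>y. lookup (p1 y) (p2 y))"
    unfolding lookup_def by (rule c1_bin[OF lk c1_p1[OF c1_id] b])
  then show ?thesis by (rule c1_bin[OF _ f g])
qed

lemma lookup_sem:
  assumes "\<forall>e\<in>set es. p1 (enc e) = key \<longleftrightarrow> fst e = k"
  shows "lookup (list_encode (map enc es)) key =
           (case find (\<lambda>e. fst e = k) es of Some e \<Rightarrow> p2 (enc e) | None \<Rightarrow> 1)"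
proof (cases "find (\<lambda>e. fst e = k) es")
  case None
  then have n: "\<forall>i<length es. fst (es ! i) \<noteq> k"
    unfolding find_None_iff by (metis nth_mem)
  have "\<forall>i<length es. \<not> p1 (lnth (list_encode (map enc es)) i) = key"
    using n assms by (auto simp: nth_mem)
  then have "bmin (length es) (\<lambda>i. p1 (lnth (list_encode (map enc es)) i) = key) = length es"
    by (rule bmin_none)
  then show ?thesis using None by (simp add: lookup_def lkfin_def)
next
  case (Some e)
  then obtain i where i: "i < length es" "fst (es ! i) = k" "e = es ! i" "\<forall>j<i. fst (es ! j) \<noteq> k"
    by (auto simp: find_Some_iff)
  have "bmin (length es) (\<lambda>i. p1 (lnth (list_encode (map enc es)) i) = key) = i"
    by (rule bmin_some) (use i assms in \<open>auto simp: nth_mem\<close>)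
  then show ?thesis using Some i by (simp add: lookup_def lkfin_def)
qed


lemma c1_pow: "c1 f \<Longrightarrow> c1 g \<Longrightarrow> c1 (\<lambda>x. f x ^ g x)"
proof -
  assume f: "c1 f" and g: "c1 g"
  let ?st = "\<lambda>s. pr (p1 s) (p2 s * p1 s)"
  have it: "(?st ^^ n) (pr a (Suc 0)) = pr a (a ^ n)" for n a by (induction n) auto
  have st: "c1 ?st" by (intro c1_pr c1_mult c1_p1 c1_p2 c1_id)
  have "c1 (\<lambda>x. p2 ((?st ^^ g x) (pr (f x) (Suc 0))))"
    by (intro c1_p2 c1_iter[OF st g] c1_pr f c1_const)
  then show ?thesis by (simp add: it)
qed

definition rep :: "nat \<Rightarrow> nat \<Rightarrow> nat" where
  "rep n e = list_encode (replicate n e)"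

lemma c1_rep: "c1 f \<Longrightarrow> c1 g \<Longrightarrow> c1 (\<lambda>x. rep (f x) (g x))"
proof -
  assume f: "c1 f" and g: "c1 g"
  let ?st = "\<lambda>s. pr (p1 s) (lcons (p1 s) (p2 s))"
  have it: "(?st ^^ n) (pr e 0) = pr e (rep n e)" for n e
    by (induction n) (auto simp: rep_def lcons_enc[of _ "replicate _ _", simplified])
  have st: "c1 ?st" by (intro c1_pr c1_lcons c1_p1 c1_p2 c1_id)
  have "c1 (\<lambda>x. p2 ((?st ^^ f x) (pr (g x) 0)))"
    by (intro c1_p2 c1_iter[OF st f] c1_pr g c1_const)
  then show ?thesis by (simp add: it)
qed

definition rmstep :: "(nat \<Rightarrow> nat \<Rightarrow> nat) \<Rightarrow> nat \<Rightarrow> nat" where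
  "rmstep g s = (if p1 (p2 s) = 0 then s else
      pr (p1 s) (pr (ltl (p1 (p2 s))) (lcons (g (p1 s) (lhdc (p1 (p2 s)))) (p2 (p2 s)))))"

definition lrevmap :: "(nat \<Rightarrow> nat \<Rightarrow> nat) \<Rightarrow> nat \<Rightarrow> nat \<Rightarrow> nat" where
  "lrevmap g p l = p2 (p2 ((rmstep g ^^ l) (pr p (pr l 0))))"

lemma rmstep_it:
  "length ys \<le> k \<Longrightarrow> (rmstep g ^^ k) (pr p (pr (list_encode ys) (list_encode acc)))
     = pr p (pr 0 (list_encode (rev (map (g p) ys) @ acc)))"
proof (induction ys arbitrary: k acc)
  case Nil
  have "(rmstep g ^^ k) (pr p (pr 0 (list_encode acc))) = pr p (pr 0 (list_encode acc))" for k
    by (induction k) (auto simp: rmstep_def)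
  then show ?case by simp
next
  case (Cons y ys)
  then obtain k' where k: "k = Suc k'" "length ys \<le> k'" by (cases k) auto
  have "(rmstep g ^^ k) (pr p (pr (list_encode (y # ys)) (list_encode acc)))
      = (rmstep g ^^ k') (rmstep g (pr p (pr (list_encode (y # ys)) (list_encode acc))))"
    by (simp add: k funpow_Suc_right del: funpow.simps)
  also have "rmstep g (pr p (pr (list_encode (y # ys)) (list_encode acc)))
      = pr p (pr (list_encode ys) (list_encode (g p y # acc)))"
    by (simp add: rmstep_def lcons_enc del: list_encode.simps) (simp add: lhdc_def p1_def)
  also have "(rmstep g ^^ k') \<dots> = pr p (pr 0 (list_encode (rev (map (g p) ys) @ (g p y # acc))))"
    using Cons.IH k by blast
  finally show ?case by simp
qed

lemma lrevmap_enc: "lrevmap g p (list_encode xs) = list_encode (rev (map (g p) xs))"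
  unfolding lrevmap_def using rmstep_it[of xs "list_encode xs" g p "[]"] length_le_enc[of xs]
  by simp

lemma c1_rmstep: "c1 (\<lambda>y. g (p1 y) (p2 y)) \<Longrightarrow> c1 (rmstep g)"
proof -
  assume g: "c1 (\<lambda>y. g (p1 y) (p2 y))"
  have "c1 (\<lambda>s. if p1 (p2 s) = 0 then s else
      pr (p1 s) (pr (ltl (p1 (p2 s))) (lcons (g (p1 s) (lhdc (p1 (p2 s)))) (p2 (p2 s)))))"
    by (intro c1_if cp_eq c1_p1 c1_p2 c1_id c1_const c1_pr c1_ltl c1_lcons c1_bin[OF g] c1_lhdc)
  then show ?thesis unfolding rmstep_def[abs_def] .
qed

lemma c1_lrevmap: "c1 (\<lambda>y. g (p1 y) (p2 y)) \<Longrightarrow> c1 f \<Longrightarrow> c1 h \<Longrightarrow> c1 (\<lambda>x. lrevmap g (f x) (h x))"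
  unfolding lrevmap_def
  by (intro c1_p2 c1_iter[OF c1_rmstep] c1_pr c1_const) 

definition lmap :: "(nat \<Rightarrow> nat \<Rightarrow> nat) \<Rightarrow> nat \<Rightarrow> nat \<Rightarrow> nat" where
  "lmap g p l = lrevmap (\<lambda>a b. b) 0 (lrevmap g p l)"

lemma lmap_enc: "lmap g p (list_encode xs) = list_encode (map (g p) xs)"
  unfolding lmap_def by (simp add: lrevmap_enc)

lemma c1_lmap: "c1 (\<lambda>y. g (p1 y) (p2 y)) \<Longrightarrow> c1 f \<Longrightarrow> c1 h \<Longrightarrow> c1 (\<lambda>x. lmap g (f x) (h x))"
  unfolding lmap_def
  by (intro c1_lrevmap c1_p2 c1_id c1_const)

definition lfilt :: "(nat \<Rightarrow> nat \<Rightarrow> bool) \<Rightarrow> nat \<Rightarrow> nat \<Rightarrow> nat" where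
  "lfilt P x N = p2 (p2 (((\<lambda>s. pr (p1 s) (pr (Suc (p1 (p2 s)))
        (if P (p1 (p2 s)) (p1 s) then lcons (p1 (p2 s)) (p2 (p2 s)) else p2 (p2 s)))) ^^ N) (pr x (pr 0 0))))"

lemma lfilt_enc: "lfilt P x N = list_encode (rev (filter (\<lambda>i. P i x) [0..<N]))"
proof -
  let ?st = "\<lambda>s. pr (p1 s) (pr (Suc (p1 (p2 s)))
        (if P (p1 (p2 s)) (p1 s) then lcons (p1 (p2 s)) (p2 (p2 s)) else p2 (p2 s)))"
  have "(?st ^^ n) (pr x (pr 0 0)) = pr x (pr n (list_encode (rev (filter (\<lambda>i. P i x) [0..<n]))))" for n
    by (induction n) (auto simp: lcons_enc)
  then show ?thesis unfolding lfilt_def by simp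
qed

lemma c1_lfilt: "cp (\<lambda>y. P (p1 y) (p2 y)) \<Longrightarrow> c1 N \<Longrightarrow> c1 (\<lambda>x. lfilt P x (N x))"
proof -
  assume P: "cp (\<lambda>y. P (p1 y) (p2 y))" and N: "c1 N"
  have st: "c1 (\<lambda>s. pr (p1 s) (pr (Suc (p1 (p2 s)))
        (if P (p1 (p2 s)) (p1 s) then lcons (p1 (p2 s)) (p2 (p2 s)) else p2 (p2 s))))"
    by (intro c1_pr c1_p1 c1_id c1_Suc c1_p2 c1_if cp_bin[OF P] c1_lcons)
  show ?thesis unfolding lfilt_def
    by (intro c1_p2 c1_iter[OF st N] c1_pr c1_id c1_const)
qed

section \<open>Course-of-values recursion\<close>

fun hist :: "(nat \<Rightarrow> nat \<Rightarrow> nat \<Rightarrow> nat) \<Rightarrow> nat \<Rightarrow> nat \<Rightarrow> nat" where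
  "hist h x 0 = 0"
| "hist h x (Suc j) = lcons (h x j (hist h x j)) (hist h x j)"

definition covv :: "(nat \<Rightarrow> nat \<Rightarrow> nat \<Rightarrow> nat) \<Rightarrow> nat \<Rightarrow> nat \<Rightarrow> nat" where
  "covv h x j = h x j (hist h x j)"

lemma hist_enc: "hist h x j = list_encode (rev (map (covv h x) [0..<j]))"
  by (induction j) (auto simp: covv_def lcons_enc)

lemma hist_lookup: "i < j \<Longrightarrow> lnth (hist h x j) (j - 1 - i) = covv h x i"
  unfolding hist_enc by (simp add: rev_nth)

lemma c1_hist: "c1 (\<lambda>y. h (p1 y) (p1 (p2 y)) (p2 (p2 y))) \<Longrightarrow> c1 f \<Longrightarrow> c1 g \<Longrightarrow>
   c1 (\<lambda>x. hist h (f x) (g x))"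
proof -
  assume h: "c1 (\<lambda>y. h (p1 y) (p1 (p2 y)) (p2 (p2 y)))" and f: "c1 f" and g: "c1 g"
  let ?st = "\<lambda>s. pr (p1 s) (pr (Suc (p1 (p2 s))) (lcons (h (p1 s) (p1 (p2 s)) (p2 (p2 s))) (p2 (p2 s))))"
  have it: "(?st ^^ n) (pr a (pr 0 0)) = pr a (pr n (hist h a n))" for n a
    by (induction n) auto
  have st: "c1 ?st" by (intro c1_pr c1_p1 c1_id c1_Suc c1_p2 c1_lcons h)
  have "c1 (\<lambda>x. p2 (p2 ((?st ^^ g x) (pr (f x) (pr 0 0)))))"
    by (intro c1_p2 c1_iter[OF st g] c1_pr f c1_const)
  then show ?thesis by (simp add: it)
qed

lemma c1_covv: "c1 (\<lambda>y. h (p1 y) (p1 (p2 y)) (p2 (p2 y))) \<Longrightarrow> c1 f \<Longrightarrow> c1 g \<Longrightarrow>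
   c1 (\<lambda>x. covv h (f x) (g x))"
proof -
  assume h: "c1 (\<lambda>y. h (p1 y) (p1 (p2 y)) (p2 (p2 y)))" and f: "c1 f" and g: "c1 g"
  have "c1 (\<lambda>x. (\<lambda>y. h (p1 y) (p1 (p2 y)) (p2 (p2 y))) (pr (f x) (pr (g x) (hist h (f x) (g x)))))"
    by (rule c1_comp[OF h]) (intro c1_pr f g c1_hist[OF h])
  then show ?thesis by (simp add: covv_def)
qed


lemma enc_form_Var: "enc_form (Var n) = pr 0 n" by (simp add: pr_def)
lemma enc_form_App: "enc_form (App c fs) = pr 1 (pr c (list_encode (map enc_form fs)))"
  by (simp add: pr_def)
declare enc_form.simps[simp del]

lemma pr_ge2: "b \<le> pr a b" unfolding pr_def by (rule le_prod_encode_2)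
lemma pr_ge1: "a \<le> pr a b" unfolding pr_def by (rule le_prod_encode_1)
lemma pr_1_gt: "b < pr 1 b"
proof -
  have "b \<le> triangle (1 + b)" by (induction b) auto
  then show ?thesis by (simp add: pr_def prod_encode_def)
qed

lemma enc_child_lt: "f \<in> set fs \<Longrightarrow> enc_form f < enc_form (App c fs)"
proof -
  assume "f \<in> set fs"
  then have "enc_form f < list_encode (map enc_form fs)" by (intro mem_lt_enc) auto
  also have "\<dots> \<le> pr c (list_encode (map enc_form fs))" by (rule pr_ge2)
  also have "\<dots> < pr 1 (pr c (list_encode (map enc_form fs)))" by (rule pr_1_gt)
  finally show ?thesis by (simp add: enc_form_App)
qed

definition valw :: "nat list \<Rightarrow> nat \<Rightarrow> nat" where
  "valw ws n = (if n < length ws then ws ! n else 1)"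
definition valc :: "nat \<Rightarrow> nat \<Rightarrow> nat" where
  "valc w n = (if n < llen w then lnth w n else 1)"
lemma valc_enc: "valc (list_encode ws) = valw ws"
  by (auto simp: valc_def valw_def)

definition gch :: "nat \<Rightarrow> nat \<Rightarrow> nat" where "gch p ch = lnth (p1 p) (p2 p - 1 - ch)"

definition fh :: "nat \<Rightarrow> nat \<Rightarrow> nat \<Rightarrow> nat" where
  "fh x j H = (if p1 j = 0 then valc (p2 x) (p2 j)
      else lookup (p2 (p1 x)) (pr (p1 (p2 j)) (lmap gch (pr H j) (p2 (p2 j)))))"

definition fev :: "nat \<Rightarrow> nat \<Rightarrow> nat \<Rightarrow> nat" where "fev z w j = covv fh (pr z w) j"

lemma enc_code_split: "enc_code k = pr (list_encode (fst k)) (list_encode (map enc_entry (snd k)))"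
  by (simp add: enc_code_def pr_def)

lemma p1_enc_entry: "p1 (enc_entry e) = pr (fst (fst e)) (list_encode (snd (fst e)))"
  by (simp add: enc_entry_def pr_def[symmetric])
lemma p2_enc_entry: "p2 (enc_entry e) = snd e"
  by (simp add: enc_entry_def pr_def[symmetric])

lemma map_of_find: "map_of xs k = map_option snd (find (\<lambda>p. fst p = k) xs)"
  by (induction xs) auto

lemma lookup_code:
  "lookup (list_encode (map enc_entry tbl)) (pr c (list_encode args)) =
     (case map_of tbl (c, args) of Some y \<Rightarrow> y | None \<Rightarrow> 1)"
proof -
  have "\<forall>e\<in>set tbl. p1 (enc_entry e) = pr c (list_encode args) \<longleftrightarrow> fst e = (c, args)"
    by (auto simp: p1_enc_entry list_encode_eq prod_eq_iff)
  from lookup_sem[OF this] show ?thesis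
    by (simp add: map_of_find p2_enc_entry split: option.splits)
qed

lemma fev_sem: "fev (enc_code k) (list_encode ws) (enc_form F) = evalf (snd (logic_of_code k)) (valw ws) F"
proof (induction F)
  case (Var n)
  show ?case by (simp add: fev_def covv_def fh_def enc_form_Var valc_enc)
next
  case (App c fs)
  let ?x = "pr (enc_code k) (list_encode ws)"
  let ?j = "enc_form (App c fs)"
  let ?H = "hist fh ?x ?j"
  have ch: "gch (pr ?H ?j) (enc_form f) = evalf (snd (logic_of_code k)) (valw ws) f" if "f \<in> set fs" for f
  proof -
    have "gch (pr ?H ?j) (enc_form f) = covv fh ?x (enc_form f)"
      unfolding gch_def using hist_lookup[OF enc_child_lt[OF that]] by simp
    also have "\<dots> = evalf (snd (logic_of_code k)) (valw ws) f"
      using App[OF that] by (simp add: fev_def)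
    finally show ?thesis .
  qed
  have "lmap gch (pr ?H ?j) (list_encode (map enc_form fs)) =
        list_encode (map (evalf (snd (logic_of_code k)) (valw ws)) fs)"
    using ch by (simp add: lmap_enc cong: map_cong)
  then show ?case
    by (simp add: fev_def covv_def fh_def enc_form_App enc_code_split lookup_code logic_of_code_def)
qed

lemma c1_gch: "c1 (\<lambda>y. gch (p1 y) (p2 y))"
  unfolding gch_def by (intro c1_lnth c1_p1 c1_p2 c1_sub c1_id c1_const)

lemma c1_valc: "c1 (\<lambda>y. valc (p1 y) (p2 y))"
  unfolding valc_def by (intro c1_if cp_less c1_lnth c1_llen c1_p1 c1_p2 c1_id c1_const)

lemma c1_fh: "c1 (\<lambda>y. fh (p1 y) (p1 (p2 y)) (p2 (p2 y)))"
  unfolding fh_def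
  by (intro c1_if cp_eq c1_bin[OF c1_valc] c1_lookup c1_pr c1_lmap[OF c1_gch] c1_p1 c1_p2 c1_id c1_const)

lemma c1_fev: "c1 f \<Longrightarrow> c1 g \<Longrightarrow> c1 h \<Longrightarrow> c1 (\<lambda>x. fev (f x) (g x) (h x))"
  unfolding fev_def by (intro c1_covv[OF c1_fh] c1_pr)


lemma c1_3: "c1 (\<lambda>y. h (p1 y) (p1 (p2 y)) (p2 (p2 y))) \<Longrightarrow> c1 f \<Longrightarrow> c1 g \<Longrightarrow> c1 k \<Longrightarrow>
   c1 (\<lambda>x. h (f x) (g x) (k x))"
proof -
  assume a: "c1 (\<lambda>y. h (p1 y) (p1 (p2 y)) (p2 (p2 y)))" "c1 f" "c1 g" "c1 k"
  have "c1 (\<lambda>x. (\<lambda>y. h (p1 y) (p1 (p2 y)) (p2 (p2 y))) (pr (f x) (pr (g x) (k x))))"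
    by (rule c1_comp[OF a(1)]) (intro c1_pr a(2-4))
  then show ?thesis by simp
qed

lemma cp_3: "cp (\<lambda>y. P (p1 y) (p1 (p2 y)) (p2 (p2 y))) \<Longrightarrow> c1 f \<Longrightarrow> c1 g \<Longrightarrow> c1 k \<Longrightarrow>
   cp (\<lambda>x. P (f x) (g x) (k x))"
  unfolding cp_def by (rule c1_3)

lemma cp_4: "cp (\<lambda>y. P (p1 y) (p1 (p2 y)) (p1 (p2 (p2 y))) (p2 (p2 (p2 y)))) \<Longrightarrow> c1 f \<Longrightarrow> c1 g \<Longrightarrow> c1 k \<Longrightarrow> c1 l \<Longrightarrow>
   cp (\<lambda>x. P (f x) (g x) (k x) (l x))"
proof -
  assume a: "cp (\<lambda>y. P (p1 y) (p1 (p2 y)) (p1 (p2 (p2 y))) (p2 (p2 (p2 y))))" "c1 f" "c1 g" "c1 k" "c1 l"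
  have "cp (\<lambda>x. (\<lambda>y. P (p1 y) (p1 (p2 y)) (p1 (p2 (p2 y))) (p2 (p2 (p2 y)))) (pr (f x) (pr (g x) (pr (k x) (l x)))))"
    by (rule cp_un[OF a(1)]) (intro c1_pr a(2-5))
  then show ?thesis by simp
qed

fun vars :: "form \<Rightarrow> nat set" where
  "vars (Var n) = {n}"
| "vars (App c fs) = (\<Union>f\<in>set fs. vars f)"

lemma evalf_local: "(\<forall>n\<in>vars F. v n = v' n) \<Longrightarrow> evalf G v F = evalf G v' F"
proof (induction F)
  case (App c fs)
  have "map (evalf G v) fs = map (evalf G v') fs" by (rule map_cong[OF refl]) (use App in auto)
  then show ?case by (metis evalf.simps(2))
qed simp

definition wh :: "nat \<Rightarrow> nat \<Rightarrow> nat \<Rightarrow> nat" where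
  "wh x j H = (if p1 j = 0 then (if p2 j < p2 x then 1 else 0)
    else if p1 j = 1 then (if p1 (p2 j) < llen (p1 x) \<and> llen (p2 (p2 j)) = lnth (p1 x) (p1 (p2 j))
        \<and> (\<forall>i<llen (p2 (p2 j)). lnth H (j - 1 - lnth (p2 (p2 j)) i) = 1) then 1 else 0)
    else 0)"

definition wfv :: "nat \<Rightarrow> nat \<Rightarrow> nat \<Rightarrow> nat" where "wfv A n j = covv wh (pr A n) j"

lemma c1_wfv: "c1 f \<Longrightarrow> c1 g \<Longrightarrow> c1 h \<Longrightarrow> c1 (\<lambda>x. wfv (f x) (g x) (h x))"
proof -
  have "c1 (\<lambda>y. wh (p1 y) (p1 (p2 y)) (p2 (p2 y)))"
    unfolding wh_def
    by (intro c1_if cp_eq cp_less cp_and cp_all c1_p1 c1_p2 c1_id c1_const c1_llen c1_lnth c1_sub)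
  then show "c1 f \<Longrightarrow> c1 g \<Longrightarrow> c1 h \<Longrightarrow> c1 (\<lambda>x. wfv (f x) (g x) (h x))"
    unfolding wfv_def by (intro c1_covv c1_pr)
qed

lemma wfv_form: "wfv (list_encode ar) n (enc_form F) = (if wf_form ar F \<and> vars F \<subseteq> {..<n} then 1 else 0)"
proof (induction F)
  case (Var x)
  then show ?case by (simp add: wfv_def covv_def wh_def enc_form_Var)
next
  case (App c fs)
  let ?x = "pr (list_encode ar) n"
  let ?j = "enc_form (App c fs)"
  let ?H = "hist wh ?x ?j"
  have ch: "lnth ?H (?j - 1 - enc_form f) = (if wf_form ar f \<and> vars f \<subseteq> {..<n} then 1 else 0)"
    if "f \<in> set fs" for f
    using hist_lookup[OF enc_child_lt[OF that]] App[OF that] by (simp add: wfv_def)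
  have "(\<forall>i<length fs. lnth ?H (?j - 1 - enc_form (fs ! i)) = 1) \<longleftrightarrow>
        (\<forall>f\<in>set fs. wf_form ar f \<and> vars f \<subseteq> {..<n})"
    using ch by (auto simp: all_set_conv_all_nth)
  then show ?case
    by (auto simp add: wfv_def covv_def wh_def enc_form_App)
qed

lemma triangle_mono: "a \<le> b \<Longrightarrow> triangle a \<le> triangle b"
  by (induction b) (auto simp: le_Suc_eq)

lemma pr_mono: "a \<le> a' \<Longrightarrow> b \<le> b' \<Longrightarrow> pr a b \<le> pr a' b'"
  unfolding pr_def prod_encode_def using triangle_mono[of "a + b" "a' + b'"] by simp

lemma p2_le: "p2 j \<le> j" using pr_ge2[of "p2 j" "p1 j"] by simp
lemma p1_le: "p1 j \<le> j" using pr_ge1[of "p1 j" "p2 j"] by simp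

lemma p2_lt_of_p1: "p1 j \<noteq> 0 \<Longrightarrow> p2 j < j"
proof -
  assume "p1 j \<noteq> 0"
  have "p2 j < pr 1 (p2 j)" by (rule pr_1_gt)
  also have "pr 1 (p2 j) \<le> pr (p1 j) (p2 j)"
    using \<open>p1 j \<noteq> 0\<close> by (intro pr_mono) auto
  finally show ?thesis by simp
qed

lemma wfv_dec: "wfv A n j = 1 \<Longrightarrow> \<exists>F. j = enc_form F"
proof (induction j rule: less_induct)
  case (less j)
  let ?H = "hist wh (pr A n) j"
  from less.prems have eq: "wh (pr A n) j ?H = 1" by (simp add: wfv_def covv_def)
  show ?case
  proof (cases "p1 j = 0")
    case True
    then have "j = enc_form (Var (p2 j))" by (metis enc_form_Var pr_surj)
    then show ?thesis by blast
  next
    case False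
    have p11: "p1 j = 1"
    proof (rule ccontr)
      assume "p1 j \<noteq> 1"
      then have "wh (pr A n) j ?H = 0" using False unfolding wh_def by simp
      with eq show False by simp
    qed
    have all: "\<forall>i<llen (p2 (p2 j)). lnth ?H (j - 1 - lnth (p2 (p2 j)) i) = 1"
    proof (rule ccontr)
      assume "\<not> (\<forall>i<llen (p2 (p2 j)). lnth ?H (j - 1 - lnth (p2 (p2 j)) i) = 1)"
      then have "wh (pr A n) j ?H = 0" using False p11 unfolding wh_def by simp
      with eq show False by simp
    qed
    let ?L = "p2 (p2 j)"
    define es where "es = list_decode ?L"
    have Les: "?L = list_encode es" by (simp add: es_def)
    have "\<forall>e\<in>set es. \<exists>F. e = enc_form F"
    proof
      fix e assume e: "e \<in> set es"
      then obtain i where i: "i < length es" "es ! i = e" by (auto simp: in_set_conv_nth)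
      have "e < ?L" using mem_lt_enc[OF e] Les by simp
      also have "?L \<le> p2 j" by (rule p2_le)
      also have "p2 j < j" using False by (rule p2_lt_of_p1)
      finally have ej: "e < j" .
      have "lnth ?L i = e" using i Les by simp
      then have "lnth ?H (j - 1 - e) = 1" using all i Les by auto
      then have "wfv A n e = 1" using hist_lookup[OF ej] by (simp add: wfv_def)
      then show "\<exists>F. e = enc_form F" using less.IH[OF ej] by blast
    qed
    then have "\<forall>e\<in>set es. enc_form (SOME F. e = enc_form F) = e"
      by (auto intro: someI_ex[where P="\<lambda>F. _ = enc_form F", symmetric])
    then have m: "map enc_form (map (\<lambda>e. SOME F. e = enc_form F) es) = es"
      by (simp add: map_idI)
    have "enc_form (App (p1 (p2 j)) (map (\<lambda>e. SOME F. e = enc_form F) es))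
        = pr 1 (pr (p1 (p2 j)) (p2 (p2 j)))"
      unfolding enc_form_App m Les ..
    also have "\<dots> = j" using p11 by (metis pr_surj)
    finally show ?thesis by (rule exI[where x="App _ _", OF sym])
  qed
qed

lemma wfv_iff: "wfv (list_encode ar) n j = 1 \<longleftrightarrow> (\<exists>F. j = enc_form F \<and> wf_form ar F \<and> vars F \<subseteq> {..<n})"
proof
  assume a: "wfv (list_encode ar) n j = 1"
  then obtain F where F: "j = enc_form F" using wfv_dec by blast
  have "(if wf_form ar F \<and> vars F \<subseteq> {..<n} then 1 else 0) = (1::nat)"
    using a wfv_form[of ar n F] F by simp
  then have "wf_form ar F \<and> vars F \<subseteq> {..<n}" by (simp split: if_splits)
  with F show "\<exists>F. j = enc_form F \<and> wf_form ar F \<and> vars F \<subseteq> {..<n}" by blast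
next
  assume "\<exists>F. j = enc_form F \<and> wf_form ar F \<and> vars F \<subseteq> {..<n}"
  then obtain F where "j = enc_form F" "wf_form ar F" "vars F \<subseteq> {..<n}" by blast
  then show "wfv (list_encode ar) n j = 1" using wfv_form[of ar n F] by simp
qed


lemma rep_Suc: "rep (Suc n) e = Suc (pr e (rep n e))"
  by (simp add: rep_def pr_def)

lemma list_encode_bound: "length xs \<le> n \<Longrightarrow> \<forall>x\<in>set xs. x \<le> e \<Longrightarrow> list_encode xs \<le> rep n e"
proof (induction xs arbitrary: n)
  case Nil then show ?case by simp
next
  case (Cons x xs)
  then obtain n' where n: "n = Suc n'" "length xs \<le> n'" by (cases n) auto
  have "list_encode xs \<le> rep n' e" using Cons n by simp
  then have "pr x (list_encode xs) \<le> pr e (rep n' e)" using Cons.prems by (intro pr_mono) auto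
  then show ?case by (simp add: n rep_Suc pr_def)
qed

definition validw :: "nat \<Rightarrow> nat \<Rightarrow> nat \<Rightarrow> bool" where
  "validw n m w \<longleftrightarrow> llen w = n \<and> (\<forall>i<n. 1 \<le> lnth w i \<and> lnth w i \<le> m)"

lemma validw_enc: "validw n m (list_encode ws) \<longleftrightarrow> length ws = n \<and> set ws \<subseteq> {1..m}"
proof -
  have "validw n m (list_encode ws) \<longleftrightarrow> length ws = n \<and> (\<forall>i<length ws. 1 \<le> ws ! i \<and> ws ! i \<le> m)"
    unfolding validw_def by auto
  also have "\<dots> \<longleftrightarrow> length ws = n \<and> (\<forall>x\<in>set ws. 1 \<le> x \<and> x \<le> m)"
    by (simp only: all_set_conv_all_nth)
  also have "\<dots> \<longleftrightarrow> length ws = n \<and> set ws \<subseteq> {1..m}" by auto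
  finally show ?thesis .
qed

lemma allw: "(\<forall>w<Suc (rep n m). validw n m w \<longrightarrow> Q w) \<longleftrightarrow>
    (\<forall>ws. length ws = n \<and> set ws \<subseteq> {1..m} \<longrightarrow> Q (list_encode ws))"
proof
  assume a: "\<forall>w<Suc (rep n m). validw n m w \<longrightarrow> Q w"
  show "\<forall>ws. length ws = n \<and> set ws \<subseteq> {1..m} \<longrightarrow> Q (list_encode ws)"
  proof (intro allI impI)
    fix ws assume ws: "length ws = n \<and> set ws \<subseteq> {1..m}"
    then have "list_encode ws \<le> rep n m" by (intro list_encode_bound) auto
    with a ws show "Q (list_encode ws)" by (simp add: validw_enc)
  qed
next
  assume a: "\<forall>ws. length ws = n \<and> set ws \<subseteq> {1..m} \<longrightarrow> Q (list_encode ws)"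
  show "\<forall>w<Suc (rep n m). validw n m w \<longrightarrow> Q w"
  proof (intro allI impI)
    fix w assume "validw n m w"
    then have "validw n m (list_encode (list_decode w))" by simp
    then show "Q w" using a validw_enc by (metis list_decode_inverse)
  qed
qed

lemma allval:
  assumes m: "1 \<le> m" and S: "\<forall>F\<in>SS. vars F \<subseteq> {..<n}"
    and Phi: "\<And>e e'. (\<forall>F\<in>SS. e F = e' F) \<Longrightarrow> Phi e = Phi e'"
  shows "(\<forall>ws. length ws = n \<and> set ws \<subseteq> {1..m} \<longrightarrow> Phi (evalf G (valw ws))) \<longleftrightarrow>
         (\<forall>v. valuation m v \<longrightarrow> Phi (evalf G v))"
proof
  assume a: "\<forall>ws. length ws = n \<and> set ws \<subseteq> {1..m} \<longrightarrow> Phi (evalf G (valw ws))"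
  show "\<forall>v. valuation m v \<longrightarrow> Phi (evalf G v)"
  proof (intro allI impI)
    fix v assume v: "valuation m v"
    let ?ws = "map v [0..<n]"
    have "length ?ws = n \<and> set ?ws \<subseteq> {1..m}" using v by (auto simp: valuation_def)
    then have "Phi (evalf G (valw ?ws))" using a by blast
    moreover have "\<forall>F\<in>SS. evalf G (valw ?ws) F = evalf G v F"
    proof
      fix F assume "F \<in> SS"
      then have "\<forall>k\<in>vars F. valw ?ws k = v k" using S by (auto simp: valw_def)
      then show "evalf G (valw ?ws) F = evalf G v F" by (rule evalf_local)
    qed
    ultimately show "Phi (evalf G v)" using Phi by metis
  qed
next
  assume a: "\<forall>v. valuation m v \<longrightarrow> Phi (evalf G v)"
  show "\<forall>ws. length ws = n \<and> set ws \<subseteq> {1..m} \<longrightarrow> Phi (evalf G (valw ws))"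
  proof (intro allI impI)
    fix ws assume ws: "length ws = n \<and> set ws \<subseteq> {1..m}"
    have "valw ws k \<in> {1..m}" for k
    proof (cases "k < length ws")
      case True
      then have "ws ! k \<in> set ws" by simp
      then have "ws ! k \<in> {1..m}" using ws by blast
      then show ?thesis using True by (simp add: valw_def)
    next
      case False
      then show ?thesis using m by (simp add: valw_def)
    qed
    then have "valuation m (valw ws)" by (simp add: valuation_def)
    with a show "Phi (evalf G (valw ws))" by blast
  qed
qed

definition inD :: "nat \<Rightarrow> nat \<Rightarrow> bool" where
  "inD z a \<longleftrightarrow> (\<exists>i<llen (p1 z). lnth (p1 z) i = a)"

lemma inD_enc: "inD (enc_code k) a \<longleftrightarrow> a \<in> set (fst k)"
  unfolding inD_def enc_code_split by (auto simp: in_set_conv_nth)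

definition ctaut :: "nat \<Rightarrow> nat \<Rightarrow> nat \<Rightarrow> nat \<Rightarrow> bool" where
  "ctaut z m n j \<longleftrightarrow> (\<forall>w<Suc (rep n m). validw n m w \<longrightarrow> inD z (fev z w j))"

lemma ctaut_sem:
  assumes "1 \<le> m" "vars F \<subseteq> {..<n}"
  shows "ctaut (enc_code k) m n (enc_form F) \<longleftrightarrow> (\<forall>v. valuation m v \<longrightarrow> satisfies (logic_of_code k) v F)"
proof -
  have "ctaut (enc_code k) m n (enc_form F) \<longleftrightarrow>
     (\<forall>ws. length ws = n \<and> set ws \<subseteq> {1..m} \<longrightarrow> (\<lambda>e. e F \<in> set (fst k)) (evalf (snd (logic_of_code k)) (valw ws)))"
    unfolding ctaut_def allw by (simp add: fev_sem inD_enc)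
  also have "\<dots> \<longleftrightarrow> (\<forall>v. valuation m v \<longrightarrow> (\<lambda>e. e F \<in> set (fst k)) (evalf (snd (logic_of_code k)) v))"
    by (rule allval[where SS="{F}"]) (use assms in auto)
  finally show ?thesis by (simp add: satisfies_def logic_of_code_def)
qed

definition crule :: "nat \<Rightarrow> nat \<Rightarrow> nat \<Rightarrow> nat \<Rightarrow> bool" where
  "crule z m n r \<longleftrightarrow> (\<forall>w<Suc (rep n m). validw n m w \<longrightarrow>
      (\<forall>t<llen (p1 r). inD z (fev z w (lnth (p1 r) t))) \<longrightarrow> inD z (fev z w (p2 r)))"

lemma enc_rule_split: "enc_rule (ps, c) = pr (list_encode (map enc_form ps)) (enc_form c)"
  by (simp add: enc_rule_def pr_def)

lemma crule_sem:
  assumes "1 \<le> m" "\<forall>F\<in>set ps \<union> {c}. vars F \<subseteq> {..<n}"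
  shows "crule (enc_code k) m n (enc_rule (ps, c)) \<longleftrightarrow>
     (\<forall>v. valuation m v \<longrightarrow> (\<forall>p\<in>set ps. satisfies (logic_of_code k) v p) \<longrightarrow> satisfies (logic_of_code k) v c)"
proof -
  have "crule (enc_code k) m n (enc_rule (ps, c)) \<longleftrightarrow>
     (\<forall>ws. length ws = n \<and> set ws \<subseteq> {1..m} \<longrightarrow>
        (\<lambda>e. (\<forall>p\<in>set ps. e p \<in> set (fst k)) \<longrightarrow> e c \<in> set (fst k)) (evalf (snd (logic_of_code k)) (valw ws)))"
    unfolding crule_def allw by (simp add: fev_sem inD_enc enc_rule_split all_set_conv_all_nth)
  also have "\<dots> \<longleftrightarrow> (\<forall>v. valuation m v \<longrightarrow>
        (\<lambda>e. (\<forall>p\<in>set ps. e p \<in> set (fst k)) \<longrightarrow> e c \<in> set (fst k)) (evalf (snd (logic_of_code k)) v))"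
    by (rule allval[where SS="set ps \<union> {c}"]) (use assms in auto)
  finally show ?thesis by (simp add: satisfies_def logic_of_code_def)
qed

lemma cp_validw: "cp (\<lambda>y. validw (p1 y) (p1 (p2 y)) (p2 (p2 y)))"
  unfolding validw_def
  by (intro cp_and cp_eq cp_all cp_le c1_llen c1_lnth c1_p1 c1_p2 c1_id c1_const)

lemma cp_inD: "cp (\<lambda>y. inD (p1 y) (p2 y))"
  unfolding inD_def by (intro cp_ex cp_eq c1_llen c1_lnth c1_p1 c1_p2 c1_id)

lemma cp_ctaut: "cp (\<lambda>y. ctaut (p1 y) (p1 (p2 y)) (p1 (p2 (p2 y))) (p2 (p2 (p2 y))))"
  unfolding ctaut_def
  by (intro cp_all cp_imp cp_3[OF cp_validw] cp_bin[OF cp_inD] c1_fev c1_Suc c1_rep c1_p1 c1_p2 c1_id)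

lemma cp_crule: "cp (\<lambda>y. crule (p1 y) (p1 (p2 y)) (p1 (p2 (p2 y))) (p2 (p2 (p2 y))))"
  unfolding crule_def
  by (intro cp_all cp_imp cp_3[OF cp_validw] cp_bin[OF cp_inD] c1_fev c1_Suc c1_rep c1_lnth c1_llen c1_p1 c1_p2 c1_id)


fun depth :: "form \<Rightarrow> nat" where
  "depth (Var n) = 0"
| "depth (App c fs) = Suc (Max (insert 0 (depth ` set fs)))"

lemma depth_child: "f \<in> set fs \<Longrightarrow> depth f < depth (App c fs)"
  by (simp add: le_imp_less_Suc)

fun rn :: "(nat \<Rightarrow> nat) \<Rightarrow> form \<Rightarrow> form" where
  "rn g (Var n) = Var (g n)"
| "rn g (App c fs) = App c (map (rn g) fs)"

lemma evalf_rn: "evalf G u (rn g F) = evalf G (u \<circ> g) F"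
proof (induction F)
  case (App c fs)
  have m: "map (evalf G u) (map (rn g) fs) = map (evalf G (u \<circ> g)) fs"
    using App by (auto simp: comp_def)
  show ?case unfolding rn.simps evalf.simps m ..
qed simp

lemma wf_rn: "wf_form ar (rn g F) = wf_form ar F"
  by (induction F) auto

lemma vars_rn: "vars (rn g F) = g ` vars F"
  by (induction F) auto

lemma eval_range:
  assumes L: "is_logic ar m L" and v: "\<forall>n. v n \<in> {1..m}"
  shows "wf_form ar F \<Longrightarrow> evalf (snd L) v F \<in> {1..m}"
proof (induction F)
  case (Var n) then show ?case using v by simp
next
  case (App c fs)
  have "set (map (evalf (snd L) v) fs) \<subseteq> {1..m}" using App by auto
  then show ?case using App.prems L unfolding is_logic_def by simp
qed

definition Wm :: "nat \<Rightarrow> nat list set" where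
  "Wm m = {ws. set ws \<subseteq> {1..m} \<and> length ws = m}"

definition pf :: "nat \<Rightarrow> logic \<Rightarrow> logic \<Rightarrow> form \<Rightarrow> nat list \<Rightarrow> nat \<times> nat" where
  "pf m L1 L2 F = (\<lambda>ws\<in>Wm m. (evalf (snd L1) (valw ws) F, evalf (snd L2) (valw ws) F))"

definition good :: "nat list \<Rightarrow> nat \<Rightarrow> nat \<Rightarrow> form \<Rightarrow> bool" where
  "good ar m d F \<longleftrightarrow> wf_form ar F \<and> vars F \<subseteq> {..<m} \<and> depth F \<le> d"

definition SF :: "nat list \<Rightarrow> nat \<Rightarrow> logic \<Rightarrow> logic \<Rightarrow> nat \<Rightarrow> (nat list \<Rightarrow> nat \<times> nat) set" where
  "SF ar m L1 L2 d = pf m L1 L2 ` {F. good ar m d F}"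

lemma SF_mono: "d \<le> d' \<Longrightarrow> SF ar m L1 L2 d \<subseteq> SF ar m L1 L2 d'"
  unfolding SF_def good_def by auto

lemma valw_val: "1 \<le> m \<Longrightarrow> ws \<in> Wm m \<Longrightarrow> \<forall>n. valw ws n \<in> {1..m}"
proof
  fix n assume m: "1 \<le> m" and ws: "ws \<in> Wm m"
  show "valw ws n \<in> {1..m}"
  proof (cases "n < length ws")
    case True
    then have "ws ! n \<in> set ws" by simp
    then have "ws ! n \<in> {1..m}" using ws by (auto simp: Wm_def)
    then show ?thesis using True by (simp add: valw_def)
  next
    case False then show ?thesis using m by (simp add: valw_def)
  qed
qed

context
  fixes ar m L1 L2
  assumes m: "1 \<le> m" and L1: "is_logic ar m L1" and L2: "is_logic ar m L2"
begin

definition KK :: nat where "KK = (m * m) ^ (m ^ m)"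

lemma SF_sub: "SF ar m L1 L2 d \<subseteq> (\<Pi>\<^sub>E ws\<in>Wm m. {1..m} \<times> {1..m})"
proof
  fix g assume "g \<in> SF ar m L1 L2 d"
  then obtain F where F: "good ar m d F" "g = pf m L1 L2 F" unfolding SF_def by auto
  show "g \<in> (\<Pi>\<^sub>E ws\<in>Wm m. {1..m} \<times> {1..m})"
    using F eval_range[OF L1 valw_val[OF m]] eval_range[OF L2 valw_val[OF m]]
    unfolding pf_def good_def by auto
qed

lemma finite_Wm: "finite (Wm m)"
  unfolding Wm_def by (rule finite_lists_length_eq) simp

lemma card_big: "card (\<Pi>\<^sub>E ws\<in>Wm m. {1..m} \<times> {1..m}) = KK"
proof -
  have "card (Wm m) = m ^ m" unfolding Wm_def using card_lists_length_eq[of "{1..m}" m] by simp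
  then show ?thesis using card_PiE[OF finite_Wm, of "\<lambda>_. {1..m} \<times> {1..m}"]
    by (simp add: KK_def card_cartesian_product)
qed

lemma finite_big: "finite (\<Pi>\<^sub>E ws\<in>Wm m. {1..m} \<times> {1..m})"
  by (intro finite_PiE finite_Wm) auto

lemma SF_finite: "finite (SF ar m L1 L2 d)"
  using finite_subset[OF SF_sub finite_big] .

lemma SF_card: "card (SF ar m L1 L2 d) \<le> KK"
  using card_mono[OF finite_big SF_sub] card_big by simp

lemma SF_step:
  assumes eq: "SF ar m L1 L2 d = SF ar m L1 L2 (Suc d)"
  shows "SF ar m L1 L2 (Suc (Suc d)) \<subseteq> SF ar m L1 L2 (Suc d)"
proof
  fix g assume "g \<in> SF ar m L1 L2 (Suc (Suc d))"
  then obtain F where F: "good ar m (Suc (Suc d)) F" "g = pf m L1 L2 F" unfolding SF_def by auto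
  show "g \<in> SF ar m L1 L2 (Suc d)"
  proof (cases F)
    case (Var n)
    then have "good ar m (Suc d) F" using F by (simp add: good_def)
    then show ?thesis using F unfolding SF_def by auto
  next
    case (App c fs)
    have ch: "\<forall>f\<in>set fs. \<exists>g. good ar m d g \<and> pf m L1 L2 g = pf m L1 L2 f"
    proof
      fix f assume f: "f \<in> set fs"
      have "good ar m (Suc d) f" using F(1) f depth_child[OF f, of c] App
        unfolding good_def by auto
      then have "pf m L1 L2 f \<in> SF ar m L1 L2 d" using eq unfolding SF_def by auto
      then show "\<exists>g. good ar m d g \<and> pf m L1 L2 g = pf m L1 L2 f" unfolding SF_def by auto
    qed
    define ch where "ch f = (SOME g. good ar m d g \<and> pf m L1 L2 g = pf m L1 L2 f)" for f
    have chp: "good ar m d (ch f) \<and> pf m L1 L2 (ch f) = pf m L1 L2 f" if "f \<in> set fs" for f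
      unfolding ch_def by (rule someI_ex) (use ch that in blast)
    let ?G = "App c (map ch fs)"
    have gG: "good ar m (Suc d) ?G"
    proof -
      have "wf_form ar ?G" using F(1) App chp unfolding good_def by auto
      moreover have "vars ?G \<subseteq> {..<m}" using chp unfolding good_def by fastforce
      moreover have "depth ?G \<le> Suc d"
      proof -
        have "\<forall>x\<in>depth ` set (map ch fs). x \<le> d" using chp unfolding good_def by auto
        then have "Max (insert 0 (depth ` set (map ch fs))) \<le> d" by (subst Max_le_iff) auto
        then show ?thesis by simp
      qed
      ultimately show ?thesis unfolding good_def by blast
    qed
    have "pf m L1 L2 ?G = pf m L1 L2 F"
    proof (rule ext)
      fix ws
      show "pf m L1 L2 ?G ws = pf m L1 L2 F ws"
      proof (cases "ws \<in> Wm m")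
        case True
        have e: "evalf (snd L1) (valw ws) (ch f) = evalf (snd L1) (valw ws) f \<and>
                 evalf (snd L2) (valw ws) (ch f) = evalf (snd L2) (valw ws) f" if "f \<in> set fs" for f
        proof -
          have "pf m L1 L2 (ch f) ws = pf m L1 L2 f ws" using chp[OF that] by simp
          then show ?thesis using True unfolding pf_def by simp
        qed
        have m12: "map (evalf (snd L1) (valw ws)) (map ch fs) = map (evalf (snd L1) (valw ws)) fs"
             "map (evalf (snd L2) (valw ws)) (map ch fs) = map (evalf (snd L2) (valw ws)) fs"
          using e by auto
        have "evalf (snd L1) (valw ws) ?G = evalf (snd L1) (valw ws) F"
             "evalf (snd L2) (valw ws) ?G = evalf (snd L2) (valw ws) F"
          unfolding App evalf.simps m12 by simp_all
        then show ?thesis using True unfolding pf_def by simp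
      next
        case False then show ?thesis unfolding pf_def by simp
      qed
    qed
    then show ?thesis using gG F(2) unfolding SF_def by (metis image_eqI mem_Collect_eq)
  qed
qed

lemma SF_stable0: "SF ar m L1 L2 d = SF ar m L1 L2 (Suc d) \<Longrightarrow>
   SF ar m L1 L2 (d + k) = SF ar m L1 L2 d \<and> SF ar m L1 L2 (d + Suc k) = SF ar m L1 L2 d"
proof (induction k)
  case 0 then show ?case by simp
next
  case (Suc k)
  then have a: "SF ar m L1 L2 (d + k) = SF ar m L1 L2 (Suc (d + k))" by simp
  have "SF ar m L1 L2 (Suc (Suc (d + k))) \<subseteq> SF ar m L1 L2 (Suc (d + k))" by (rule SF_step[OF a])
  moreover have "SF ar m L1 L2 (Suc (d + k)) \<subseteq> SF ar m L1 L2 (Suc (Suc (d + k)))" by (rule SF_mono) simp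
  ultimately show ?case using Suc by simp
qed

lemma SF_stable: "SF ar m L1 L2 d = SF ar m L1 L2 (Suc d) \<Longrightarrow> d \<le> e \<Longrightarrow> SF ar m L1 L2 e = SF ar m L1 L2 d"
  using SF_stable0[of d "e - d"] by simp

lemma SF_exists_fix: "\<exists>d\<le>KK. SF ar m L1 L2 d = SF ar m L1 L2 (Suc d)"
proof (rule ccontr)
  assume nf: "\<not> ?thesis"
  have ne: "\<forall>d\<le>KK. SF ar m L1 L2 d \<subset> SF ar m L1 L2 (Suc d)"
  proof (intro allI impI)
    fix d assume d: "d \<le> KK"
    have "SF ar m L1 L2 d \<subseteq> SF ar m L1 L2 (Suc d)" by (rule SF_mono) simp
    moreover have "SF ar m L1 L2 d \<noteq> SF ar m L1 L2 (Suc d)" using nf d by blast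
    ultimately show "SF ar m L1 L2 d \<subset> SF ar m L1 L2 (Suc d)" by blast
  qed
  have "d \<le> Suc KK \<Longrightarrow> d \<le> card (SF ar m L1 L2 d)" for d
  proof (induction d)
    case (Suc d)
    then have "card (SF ar m L1 L2 d) < card (SF ar m L1 L2 (Suc d))"
      using ne SF_finite by (intro psubset_card_mono) auto
    then show ?case using Suc by simp
  qed simp
  then have "Suc KK \<le> card (SF ar m L1 L2 (Suc KK))" by simp
  then show False using SF_card[of "Suc KK"] by simp
qed

lemma SF_all: "SF ar m L1 L2 e \<subseteq> SF ar m L1 L2 KK"
proof -
  obtain d where d: "d \<le> KK" "SF ar m L1 L2 d = SF ar m L1 L2 (Suc d)" using SF_exists_fix by blast
  have "SF ar m L1 L2 e \<subseteq> SF ar m L1 L2 (max e d)" by (rule SF_mono) simp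
  also have "\<dots> = SF ar m L1 L2 d" by (rule SF_stable[OF d(2)]) simp
  also have "\<dots> \<subseteq> SF ar m L1 L2 KK" by (rule SF_mono[OF d(1)])
  finally show ?thesis .
qed

lemma Taut_m:
  assumes "wf_form ar F" "vars F \<subseteq> {..<m}"
  shows "F \<in> Taut ar m L \<longleftrightarrow> (\<forall>ws\<in>Wm m. evalf (snd L) (valw ws) F \<in> fst L)"
proof -
  have "(\<forall>ws. length ws = m \<and> set ws \<subseteq> {1..m} \<longrightarrow> (\<lambda>e. e F \<in> fst L) (evalf (snd L) (valw ws))) \<longleftrightarrow>
        (\<forall>v. valuation m v \<longrightarrow> (\<lambda>e. e F \<in> fst L) (evalf (snd L) v))"
    by (rule allval[where SS="{F}"]) (use assms m in auto)
  then show ?thesis using assms unfolding Taut_def satisfies_def Wm_def by auto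
qed

lemma incl_reduce:
  "Taut ar m L1 \<subseteq> Taut ar m L2 \<longleftrightarrow>
   (\<forall>F. good ar m KK F \<and> F \<in> Taut ar m L1 \<longrightarrow> F \<in> Taut ar m L2)"
proof
  assume "Taut ar m L1 \<subseteq> Taut ar m L2" then show "\<forall>F. good ar m KK F \<and> F \<in> Taut ar m L1 \<longrightarrow> F \<in> Taut ar m L2"
    by blast
next
  assume H: "\<forall>F. good ar m KK F \<and> F \<in> Taut ar m L1 \<longrightarrow> F \<in> Taut ar m L2"
  show "Taut ar m L1 \<subseteq> Taut ar m L2"
  proof
    fix F assume F1: "F \<in> Taut ar m L1"
    show "F \<in> Taut ar m L2"
    proof (rule ccontr)
      assume F2: "F \<notin> Taut ar m L2"
      have wf: "wf_form ar F" using F1 by (simp add: Taut_def)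
      then obtain v where v: "valuation m v" "\<not> satisfies L2 v F" using F2 by (auto simp: Taut_def)
      define g where "g n = v n - 1" for n
      let ?F' = "rn g F"
      have wf': "wf_form ar ?F'" using wf by (simp add: wf_rn)
      have "g n < m" for n
      proof -
        have "v n \<in> {1..m}" using v(1) by (simp add: valuation_def)
        then show ?thesis by (auto simp: g_def)
      qed
      then have vars': "vars ?F' \<subseteq> {..<m}" by (auto simp: vars_rn)
      have T1: "?F' \<in> Taut ar m L1"
        unfolding Taut_def
      proof (intro CollectI conjI allI impI wf')
        fix u assume u: "valuation m u"
        then have "valuation m (u \<circ> g)" by (simp add: valuation_def)
        then show "satisfies L1 u ?F'" using F1 by (simp add: Taut_def satisfies_def evalf_rn)
      qed
      define u0 where "u0 n = (if n < m then Suc n else 1)" for n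
      have "valuation m u0" using m by (auto simp: valuation_def u0_def)
      have "u0 \<circ> g = v"
      proof
        fix n have "v n \<in> {1..m}" using v(1) by (simp add: valuation_def)
        then show "(u0 \<circ> g) n = v n" unfolding u0_def g_def by auto
      qed
      then have "evalf (snd L2) u0 ?F' = evalf (snd L2) v F" by (simp add: evalf_rn)
      then have "\<not> satisfies L2 u0 ?F'" using v(2) by (simp add: satisfies_def)
      then have T2: "?F' \<notin> Taut ar m L2" using \<open>valuation m u0\<close> by (auto simp: Taut_def)
      have "good ar m (depth ?F') ?F'" using wf' vars' by (simp add: good_def)
      then have "pf m L1 L2 ?F' \<in> SF ar m L1 L2 KK" using SF_all[of "depth ?F'"] unfolding SF_def by auto
      then obtain G where G: "good ar m KK G" "pf m L1 L2 G = pf m L1 L2 ?F'" unfolding SF_def by auto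
      have ev: "evalf (snd L1) (valw ws) G = evalf (snd L1) (valw ws) ?F' \<and>
                evalf (snd L2) (valw ws) G = evalf (snd L2) (valw ws) ?F'" if "ws \<in> Wm m" for ws
        using fun_cong[OF G(2), of ws] that unfolding pf_def by auto
      have gG: "wf_form ar G" "vars G \<subseteq> {..<m}" using G(1) by (auto simp: good_def)
      have "G \<in> Taut ar m L1" using T1 ev by (simp add: Taut_m[OF gG] Taut_m[OF wf' vars'])
      then have "G \<in> Taut ar m L2" using H G(1) by blast
      then have "?F' \<in> Taut ar m L2" using ev by (simp add: Taut_m[OF gG] Taut_m[OF wf' vars'])
      then show False using T2 by simp
    qed
  qed
qed

end


lemma incl_reduce':
  assumes "1 \<le> m" "is_logic ar m L1" "is_logic ar m L2"
  shows "Taut ar m L1 \<subseteq> Taut ar m L2 \<longleftrightarrow>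
   (\<forall>F. good ar m ((m * m) ^ (m ^ m)) F \<and> F \<in> Taut ar m L1 \<longrightarrow> F \<in> Taut ar m L2)"
  using incl_reduce[OF assms] unfolding KK_def[OF assms] .

section \<open>Bound on formula codes\<close>

fun bf :: "nat \<Rightarrow> nat \<Rightarrow> nat \<Rightarrow> nat \<Rightarrow> nat" where
  "bf LA SA M 0 = pr 0 M"
| "bf LA SA M (Suc d) = bf LA SA M d + pr 1 (pr LA (rep SA (bf LA SA M d)))"

definition bfstep :: "nat \<Rightarrow> nat" where
  "bfstep s = pr (p1 s) (pr (p1 (p2 s)) (p2 (p2 s) + pr 1 (pr (p1 s) (rep (p1 (p2 s)) (p2 (p2 s))))))"

lemma bf_it: "(bfstep ^^ d) (pr LA (pr SA (pr 0 M))) = pr LA (pr SA (bf LA SA M d))"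
  by (induction d) (simp_all add: bfstep_def)

lemma c1_bf: "c1 f \<Longrightarrow> c1 g \<Longrightarrow> c1 h \<Longrightarrow> c1 k \<Longrightarrow> c1 (\<lambda>x. bf (f x) (g x) (h x) (k x))"
proof -
  assume a: "c1 f" "c1 g" "c1 h" "c1 k"
  have st: "c1 bfstep" unfolding bfstep_def[abs_def]
    by (intro c1_pr c1_p1 c1_p2 c1_add c1_rep c1_const c1_id)
  have "c1 (\<lambda>x. p2 (p2 ((bfstep ^^ k x) (pr (f x) (pr (g x) (pr 0 (h x)))))))"
    by (intro c1_p2 c1_iter[OF st a(4)] c1_pr a(1-3) c1_const)
  then show ?thesis by (simp add: bf_it)
qed

lemma bf_mono: "d \<le> d' \<Longrightarrow> bf LA SA M d \<le> bf LA SA M d'"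
  by (induction d' ) (auto simp: le_Suc_eq)

lemma enc_bound:
  "good ar M d F \<Longrightarrow> enc_form F \<le> bf (length ar) (sum_list ar) M d"
proof (induction F arbitrary: d)
  case (Var n)
  then have "n < M" by (simp add: good_def)
  then have "enc_form (Var n) \<le> bf (length ar) (sum_list ar) M 0"
    by (simp add: enc_form_Var pr_mono)
  moreover have "bf (length ar) (sum_list ar) M 0 \<le> bf (length ar) (sum_list ar) M d" by (rule bf_mono) simp
  ultimately show ?case by linarith
next
  case (App c fs)
  from App.prems obtain d' where d: "d = Suc d'" by (cases d) (auto simp: good_def)
  have wf: "c < length ar" "length fs = ar ! c" "\<forall>f\<in>set fs. wf_form ar f"
    using App.prems by (auto simp: good_def)
  have ch: "enc_form f \<le> bf (length ar) (sum_list ar) M d'" if f: "f \<in> set fs" for f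
  proof (rule App.IH[OF f])
    have "depth f < depth (App c fs)" by (rule depth_child[OF f])
    then show "good ar M d' f" using App.prems f d unfolding good_def by auto
  qed
  have "length (map enc_form fs) \<le> sum_list ar" using wf elem_le_sum_list[of c ar] by simp
  then have "list_encode (map enc_form fs) \<le> rep (sum_list ar) (bf (length ar) (sum_list ar) M d')"
    using ch by (intro list_encode_bound) auto
  then have "pr c (list_encode (map enc_form fs)) \<le> pr (length ar) (rep (sum_list ar) (bf (length ar) (sum_list ar) M d'))"
    using wf by (intro pr_mono) auto
  then have "enc_form (App c fs) \<le> pr 1 (pr (length ar) (rep (sum_list ar) (bf (length ar) (sum_list ar) M d')))"
    unfolding enc_form_App by (rule pr_mono[OF order.refl])
  then show ?case using d by simp
qed

section \<open>Canonical codes of logics\<close>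

definition argsT :: "nat list \<Rightarrow> nat \<Rightarrow> (nat \<times> nat list) list" where
  "argsT ar m = concat (map (\<lambda>c. map (\<lambda>a. (c, a)) (List.n_lists (ar ! c) [1..<Suc m])) [0..<length ar])"

lemma mem_argsT: "(c, a) \<in> set (argsT ar m) \<longleftrightarrow> c < length ar \<and> length a = ar ! c \<and> set a \<subseteq> {1..m}"
proof -
  have u: "set [1..<Suc m] = {1..m}" by auto
  have "(c, a) \<in> set (argsT ar m) \<longleftrightarrow> c < length ar \<and> a \<in> set (List.n_lists (ar ! c) [1..<Suc m])"
    unfolding argsT_def by auto
  also have "\<dots> \<longleftrightarrow> c < length ar \<and> length a = ar ! c \<and> set a \<subseteq> set [1..<Suc m]"
    by (simp only: set_n_lists mem_Collect_eq)
  finally show ?thesis unfolding u .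
qed

lemma length_argsT: "1 \<le> m \<Longrightarrow> length (argsT ar m) \<le> length ar * m ^ sum_list ar"
proof -
  assume m: "1 \<le> m"
  have "length (argsT ar m) = (\<Sum>c\<leftarrow>[0..<length ar]. m ^ (ar ! c))"
    unfolding argsT_def using m by (simp add: length_concat length_n_lists comp_def)
  also have "\<dots> \<le> (\<Sum>c\<leftarrow>[0..<length ar]. m ^ sum_list ar)"
    by (rule sum_list_mono, rule power_increasing) (use m in \<open>auto simp: elem_le_sum_list\<close>)
  also have "\<dots> = length ar * m ^ sum_list ar" by (simp add: sum_list_triv)
  finally show ?thesis .
qed

definition canon :: "nat list \<Rightarrow> nat \<Rightarrow> logic \<Rightarrow> logic_code" where
  "canon ar m M = (sorted_list_of_set (fst M), map (\<lambda>ca. (ca, snd M (fst ca) (snd ca))) (argsT ar m))"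

lemma map_of_tab: "map_of (map (\<lambda>k. (k, f k)) ks) k = (if k \<in> set ks then Some (f k) else None)"
  by (induction ks) auto

lemma canon_same:
  assumes "is_logic ar m M"
  shows "same_logic ar m M (logic_of_code (canon ar m M))"
proof -
  have fin: "finite (fst M)" using assms unfolding is_logic_def by (auto intro: finite_subset)
  show ?thesis unfolding same_logic_def
  proof (intro conjI allI impI)
    show "fst M = fst (logic_of_code (canon ar m M))"
      using fin by (simp add: logic_of_code_def canon_def)
  next
    fix c args assume "c < length ar" "length args = ar ! c \<and> set args \<subseteq> {1..m}"
    then have "(c, args) \<in> set (argsT ar m)" using mem_argsT[of c args ar m] by blast
    then show "snd M c args = snd (logic_of_code (canon ar m M)) c args"
      by (simp add: logic_of_code_def canon_def map_of_tab[where f="\<lambda>ca. snd M (fst ca) (snd ca)", simplified])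
  qed
qed

definition BLv :: "nat \<Rightarrow> nat \<Rightarrow> nat \<Rightarrow> nat" where
  "BLv LA SA M = pr (rep M M) (rep (LA * M ^ SA) (pr (pr LA (rep SA M)) M))"

lemma canon_bound:
  assumes L: "is_logic ar m M" and m: "1 \<le> m"
  shows "enc_code (canon ar m M) \<le> BLv (length ar) (sum_list ar) m"
proof -
  have sub: "fst M \<subseteq> {1..m}" using L by (simp add: is_logic_def)
  then have fin: "finite (fst M)" by (rule finite_subset) simp
  have "length (sorted_list_of_set (fst M)) \<le> m"
    using card_mono[OF _ sub] by simp
  moreover have "\<forall>x\<in>set (sorted_list_of_set (fst M)). x \<le> m" using sub fin by auto
  ultimately have D: "list_encode (sorted_list_of_set (fst M)) \<le> rep m m"
    by (rule list_encode_bound)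
  let ?tb = "map (\<lambda>ca. (ca, snd M (fst ca) (snd ca))) (argsT ar m)"
  have "\<forall>e\<in>set (map enc_entry ?tb). e \<le> pr (pr (length ar) (rep (sum_list ar) m)) m"
  proof
    fix e assume "e \<in> set (map enc_entry ?tb)"
    then obtain c a where ca: "(c, a) \<in> set (argsT ar m)" "e = enc_entry ((c, a), snd M c a)" by auto
    then have ca': "c < length ar" "length a = ar ! c" "set a \<subseteq> {1..m}" using mem_argsT[of c a ar m] by blast+
    have v: "snd M c a \<le> m" using L ca' unfolding is_logic_def by auto
    have "length a \<le> sum_list ar" using ca' elem_le_sum_list by simp
    then have "list_encode a \<le> rep (sum_list ar) m" using ca' by (intro list_encode_bound) auto
    then have "pr (pr c (list_encode a)) (snd M c a) \<le> pr (pr (length ar) (rep (sum_list ar) m)) m"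
      using ca' v by (intro pr_mono) auto
    then show "e \<le> pr (pr (length ar) (rep (sum_list ar) m)) m"
      using ca by (simp add: enc_entry_def pr_def)
  qed
  moreover have "length (map enc_entry ?tb) \<le> length ar * m ^ sum_list ar"
    using length_argsT[OF m] by simp
  ultimately have T: "list_encode (map enc_entry ?tb) \<le> rep (length ar * m ^ sum_list ar) (pr (pr (length ar) (rep (sum_list ar) m)) m)"
    by (intro list_encode_bound) auto
  show ?thesis unfolding enc_code_split BLv_def canon_def using D T by (simp add: pr_mono)
qed

definition dec_entry :: "nat \<Rightarrow> (nat \<times> nat list) \<times> nat" where
  "dec_entry e = ((p1 (p1 e), list_decode (p2 (p1 e))), p2 e)"
definition dec_code :: "nat \<Rightarrow> logic_code" where
  "dec_code z = (list_decode (p1 z), map dec_entry (list_decode (p2 z)))"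

lemma enc_dec_entry: "enc_entry (dec_entry e) = e"
  by (simp add: enc_entry_def dec_entry_def pr_def[symmetric])

lemma enc_dec_code: "enc_code (dec_code z) = z"
proof -
  have "map enc_entry (map dec_entry (list_decode (p2 z))) = list_decode (p2 z)"
    by (simp add: enc_dec_entry comp_def)
  then show ?thesis by (simp add: enc_code_split dec_code_def)
qed

lemma enc_entry_inj: "enc_entry e1 = enc_entry e2 \<Longrightarrow> e1 = e2"
  by (simp add: enc_entry_def list_encode_eq prod_eq_iff)

lemma enc_code_inj: "enc_code k1 = enc_code k2 \<Longrightarrow> k1 = k2"
proof -
  assume "enc_code k1 = enc_code k2"
  then have a: "fst k1 = fst k2" "map enc_entry (snd k1) = map enc_entry (snd k2)"
    by (simp_all add: enc_code_split list_encode_eq)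
  have "inj enc_entry" by (auto intro: injI enc_entry_inj)
  then have "snd k1 = snd k2" using a(2) by (simp add: inj_map_eq_map)
  with a(1) show ?thesis by (simp add: prod_eq_iff)
qed

lemma dec_enc_code: "dec_code (enc_code k) = k"
  using enc_code_inj[OF enc_dec_code] .


lemma same_eval:
  assumes L: "is_logic ar m M" and S: "same_logic ar m M M'" and v: "valuation m v"
  shows "wf_form ar F \<Longrightarrow> evalf (snd M) v F = evalf (snd M') v F"
proof (induction F)
  case (Var n) then show ?case by simp
next
  case (App c fs)
  have wf: "c < length ar" "length fs = ar ! c" "\<forall>f\<in>set fs. wf_form ar f" using App.prems by auto
  have m: "map (evalf (snd M) v) fs = map (evalf (snd M') v) fs" using App wf by auto
  have "set (map (evalf (snd M) v) fs) \<subseteq> {1..m}"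
    using eval_range[OF L] v wf by (auto simp: valuation_def)
  then have "snd M c (map (evalf (snd M) v) fs) = snd M' c (map (evalf (snd M) v) fs)"
    using S wf unfolding same_logic_def by auto
  then show ?case unfolding evalf.simps m[symmetric] .
qed

lemma same_sat:
  assumes "is_logic ar m M" "same_logic ar m M M'" "valuation m v" "wf_form ar F"
  shows "satisfies M v F \<longleftrightarrow> satisfies M' v F"
  using same_eval[OF assms] assms(2) by (simp add: satisfies_def same_logic_def)

lemma same_Taut:
  assumes "is_logic ar m M" "same_logic ar m M M'"
  shows "Taut ar m M = Taut ar m M'"
  using same_sat[OF assms] unfolding Taut_def by blast

lemma same_is_logic:
  assumes "is_logic ar m M" "same_logic ar m M M'"
  shows "is_logic ar m M'"
  using assms unfolding is_logic_def same_logic_def by auto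

lemma same_cover:
  assumes W: "wf_calc ar axs rls" and L: "is_logic ar m M" and S: "same_logic ar m M M'"
  shows "is_cover ar m axs rls M \<longleftrightarrow> is_cover ar m axs rls M'"
proof -
  have r: "(\<forall>v. valuation m v \<longrightarrow> (\<forall>p\<in>set ps. satisfies M v p) \<longrightarrow> satisfies M v c) \<longleftrightarrow>
           (\<forall>v. valuation m v \<longrightarrow> (\<forall>p\<in>set ps. satisfies M' v p) \<longrightarrow> satisfies M' v c)"
    if "(ps, c) \<in> set rls" for ps c
  proof -
    have "\<forall>p\<in>set ps. wf_form ar p" "wf_form ar c" using W that unfolding wf_calc_def by auto
    then show ?thesis using same_sat[OF L S] by (metis (no_types, lifting))
  qed
  show ?thesis unfolding is_cover_def same_Taut[OF L S]
    using r by (auto simp: case_prod_beta)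
qed

lemma same_minimal:
  assumes W: "wf_calc ar axs rls" and L: "is_logic ar m M" and S: "same_logic ar m M M'"
  shows "minimal_cover ar m axs rls M \<longleftrightarrow> minimal_cover ar m axs rls M'"
  unfolding minimal_cover_def lhd_def same_Taut[OF L S] same_cover[OF W L S]
  using L same_is_logic[OF L S] by blast


definition ARc :: "nat \<Rightarrow> nat" where "ARc x = lnth x 0"
definition AXc :: "nat \<Rightarrow> nat" where "AXc x = lnth x 1"
definition RLc :: "nat \<Rightarrow> nat" where "RLc x = lnth x 2"
definition MMc :: "nat \<Rightarrow> nat" where "MMc x = lnth x 3"

lemma input_dec:
  assumes "x = enc_input ar axs rls m"
  shows "ARc x = list_encode ar" "AXc x = list_encode (map enc_form axs)"
    "RLc x = list_encode (map enc_rule rls)" "MMc x = m"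
proof -
  have x: "x = list_encode [list_encode ar, list_encode (map enc_form axs), list_encode (map enc_rule rls), m]"
    using assms by (simp add: enc_input_def del: list_encode.simps)
  show "ARc x = list_encode ar" "AXc x = list_encode (map enc_form axs)"
    "RLc x = list_encode (map enc_rule rls)" "MMc x = m"
    unfolding ARc_def AXc_def RLc_def MMc_def x by (simp_all add: numeral_eq_Suc del: list_encode.simps)
qed

lemma input_lt:
  assumes "x = enc_input ar axs rls m"
  shows "list_encode (map enc_form axs) < x" "list_encode (map enc_rule rls) < x"
proof -
  have x: "x = list_encode [list_encode ar, list_encode (map enc_form axs), list_encode (map enc_rule rls), m]"
    using assms by (simp add: enc_input_def del: list_encode.simps)
  show "list_encode (map enc_form axs) < x" "list_encode (map enc_rule rls) < x"
    unfolding x by (rule mem_lt_enc, simp)+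
qed

definition SLc :: "nat \<Rightarrow> nat" where "SLc L = (\<Sum>i<llen L. lnth L i)"

lemma SLc_enc: "SLc (list_encode ar) = sum_list ar"
  unfolding SLc_def by (simp add: sum_list_sum_nth atLeast0LessThan)

definition BFc :: "nat \<Rightarrow> nat" where
  "BFc x = bf (llen (ARc x)) (SLc (ARc x)) (MMc x) ((MMc x * MMc x) ^ (MMc x ^ MMc x))"
definition BLc :: "nat \<Rightarrow> nat" where
  "BLc x = BLv (llen (ARc x)) (SLc (ARc x)) (MMc x)"

definition islog :: "nat \<Rightarrow> nat \<Rightarrow> bool" where
  "islog x z \<longleftrightarrow> (\<forall>i<llen (p1 z). 1 \<le> lnth (p1 z) i \<and> lnth (p1 z) i \<le> MMc x) \<and>
     (\<forall>c<llen (ARc x). \<forall>a<Suc (rep (lnth (ARc x) c) (MMc x)). validw (lnth (ARc x) c) (MMc x) a \<longrightarrow>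
        1 \<le> lookup (p2 z) (pr c a) \<and> lookup (p2 z) (pr c a) \<le> MMc x)"

definition iscov :: "nat \<Rightarrow> nat \<Rightarrow> bool" where
  "iscov x z \<longleftrightarrow> (\<forall>i<llen (AXc x). ctaut z (MMc x) (Suc x) (lnth (AXc x) i)) \<and>
     (\<forall>i<llen (RLc x). crule z (MMc x) (Suc x) (lnth (RLc x) i))"

definition incl :: "nat \<Rightarrow> nat \<Rightarrow> nat \<Rightarrow> bool" where
  "incl x z1 z2 \<longleftrightarrow> (\<forall>j<Suc (BFc x). wfv (ARc x) (MMc x) j = 1 \<and> ctaut z1 (MMc x) (MMc x) j \<longrightarrow>
      ctaut z2 (MMc x) (MMc x) j)"

definition goodc :: "nat \<Rightarrow> nat \<Rightarrow> bool" where
  "goodc x z \<longleftrightarrow> islog x z \<and> iscov x z"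

definition minimal :: "nat \<Rightarrow> nat \<Rightarrow> bool" where
  "minimal x z \<longleftrightarrow> goodc x z \<and> \<not> (\<exists>z'<Suc (BLc x). goodc x z' \<and> incl x z' z \<and> \<not> incl x z z')"

definition OUT :: "nat \<Rightarrow> nat" where
  "OUT x = lfilt (\<lambda>z x. minimal x z) x (Suc (BLc x))"

section \<open>Computability\<close>

lemma c1_ARc: "c1 f \<Longrightarrow> c1 (\<lambda>x. ARc (f x))" unfolding ARc_def by (intro c1_lnth c1_const)
lemma c1_AXc: "c1 f \<Longrightarrow> c1 (\<lambda>x. AXc (f x))" unfolding AXc_def by (intro c1_lnth c1_const)
lemma c1_RLc: "c1 f \<Longrightarrow> c1 (\<lambda>x. RLc (f x))" unfolding RLc_def by (intro c1_lnth c1_const)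
lemma c1_MMc: "c1 f \<Longrightarrow> c1 (\<lambda>x. MMc (f x))" unfolding MMc_def by (intro c1_lnth c1_const)
lemma c1_SLc: "c1 f \<Longrightarrow> c1 (\<lambda>x. SLc (f x))"
proof -
  assume f: "c1 f"
  have "c1 (\<lambda>L. \<Sum>i<llen L. lnth L i)"
    by (rule c1_sum) (intro c1_lnth c1_p1 c1_p2 c1_id c1_llen)+
  then show ?thesis unfolding SLc_def[abs_def] by (rule c1_comp[OF _ f])
qed

lemma c1_BFc: "c1 BFc"
  unfolding BFc_def[abs_def]
  by (intro c1_bf c1_llen c1_ARc c1_SLc c1_MMc c1_pow c1_mult c1_id)

lemma c1_BLv: "c1 f \<Longrightarrow> c1 g \<Longrightarrow> c1 h \<Longrightarrow> c1 (\<lambda>x. BLv (f x) (g x) (h x))"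
  unfolding BLv_def by (intro c1_pr c1_rep c1_mult c1_pow)

lemma c1_BLc: "c1 BLc"
  unfolding BLc_def[abs_def] by (intro c1_BLv c1_llen c1_ARc c1_SLc c1_MMc c1_id)

lemma cp_islog: "cp (\<lambda>y. islog (p1 y) (p2 y))"
  unfolding islog_def
  by (intro cp_and cp_all cp_le cp_imp c1_lnth c1_llen c1_p1 c1_p2 c1_id c1_const c1_MMc c1_ARc c1_Suc c1_rep
      cp_3[OF cp_validw] c1_lookup c1_pr)

lemma cp_iscov: "cp (\<lambda>y. iscov (p1 y) (p2 y))"
  unfolding iscov_def
  by (intro cp_and cp_all cp_4[OF cp_ctaut] cp_4[OF cp_crule] c1_lnth c1_llen c1_p1 c1_p2 c1_id c1_MMc c1_AXc c1_RLc c1_Suc)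

lemma cp_incl: "cp (\<lambda>y. incl (p1 y) (p1 (p2 y)) (p2 (p2 y)))"
  unfolding incl_def
  by (intro cp_all cp_imp cp_and cp_eq cp_4[OF cp_ctaut] c1_wfv c1_Suc c1_comp[OF c1_BFc] c1_p1 c1_p2 c1_id c1_MMc c1_ARc c1_const)

lemma cp_goodc: "cp (\<lambda>y. goodc (p1 y) (p2 y))"
  unfolding goodc_def by (intro cp_and cp_islog cp_iscov)

lemma cp_minimal: "cp (\<lambda>y. minimal (p1 y) (p2 y))"
  unfolding minimal_def
  by (intro cp_and cp_goodc cp_not cp_ex cp_bin[OF cp_goodc] cp_3[OF cp_incl] c1_Suc c1_comp[OF c1_BLc]
      c1_p1 c1_p2 c1_id)

lemma c1_OUT: "c1 OUT"
  unfolding OUT_def[abs_def]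
  by (intro c1_lfilt cp_bin[OF cp_minimal] c1_p1 c1_p2 c1_id c1_Suc c1_BLc)


lemma var_le_enc: "n \<in> vars F \<Longrightarrow> n \<le> enc_form F"
proof (induction F)
  case (Var k) then show ?case using pr_ge2[of n 0] by (simp add: enc_form_Var)
next
  case (App c fs)
  then obtain f where f: "f \<in> set fs" "n \<in> vars f" by auto
  then have "n \<le> enc_form f" using App.IH by blast
  also have "\<dots> < enc_form (App c fs)" by (rule enc_child_lt[OF f(1)])
  finally show ?case by simp
qed

lemma islog_sem:
  assumes x: "x = enc_input ar axs rls m"
  shows "islog x (enc_code k) \<longleftrightarrow> is_logic ar m (logic_of_code k)"
proof -
  note d = input_dec[OF x]
  have A: "(\<forall>i<llen (p1 (enc_code k)). 1 \<le> lnth (p1 (enc_code k)) i \<and> lnth (p1 (enc_code k)) i \<le> MMc x)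
      \<longleftrightarrow> fst (logic_of_code k) \<subseteq> {1..m}"
  proof -
    have "(\<forall>i<llen (p1 (enc_code k)). 1 \<le> lnth (p1 (enc_code k)) i \<and> lnth (p1 (enc_code k)) i \<le> MMc x)
       \<longleftrightarrow> (\<forall>i<length (fst k). 1 \<le> fst k ! i \<and> fst k ! i \<le> m)"
      by (simp add: enc_code_split d)
    also have "\<dots> \<longleftrightarrow> (\<forall>a\<in>set (fst k). 1 \<le> a \<and> a \<le> m)" by (simp only: all_set_conv_all_nth)
    finally show ?thesis by (auto simp: logic_of_code_def)
  qed
  have B: "(\<forall>a<Suc (rep (lnth (ARc x) c) (MMc x)). validw (lnth (ARc x) c) (MMc x) a \<longrightarrow>
        1 \<le> lookup (p2 (enc_code k)) (pr c a) \<and> lookup (p2 (enc_code k)) (pr c a) \<le> MMc x)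
      \<longleftrightarrow> (\<forall>args. length args = ar ! c \<and> set args \<subseteq> {1..m} \<longrightarrow> snd (logic_of_code k) c args \<in> {1..m})"
    if c: "c < length ar" for c
  proof -
    have "lnth (ARc x) c = ar ! c" using c d by simp
    then show ?thesis
      by (simp add: allw d enc_code_split lookup_code logic_of_code_def)
  qed
  show ?thesis
    unfolding islog_def is_logic_def A using B d by simp
qed

lemma calc_vars:
  assumes x: "x = enc_input ar axs rls m"
  shows "\<forall>a\<in>set axs. vars a \<subseteq> {..<Suc x}"
    "\<forall>(ps, c)\<in>set rls. \<forall>F\<in>set ps \<union> {c}. vars F \<subseteq> {..<Suc x}"
proof -
  have "\<forall>a\<in>set axs. enc_form a < x"
  proof
    fix a assume "a \<in> set axs"
    then have "enc_form a < list_encode (map enc_form axs)" by (intro mem_lt_enc) simp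
    then show "enc_form a < x" using input_lt[OF x] by simp
  qed
  then show "\<forall>a\<in>set axs. vars a \<subseteq> {..<Suc x}"
    using var_le_enc by (meson le_less_trans lessThan_iff less_SucI subsetI)
  have "\<forall>F\<in>set ps \<union> {c}. enc_form F < x" if r: "(ps, c) \<in> set rls" for ps c
  proof
    have er: "enc_rule (ps, c) < x"
    proof -
      have "enc_rule (ps, c) < list_encode (map enc_rule rls)" using r by (intro mem_lt_enc) force
      then show ?thesis using input_lt[OF x] by simp
    qed
    fix F assume "F \<in> set ps \<union> {c}"
    then have "enc_form F \<le> enc_rule (ps, c)"
    proof
      assume "F \<in> set ps"
      then have "enc_form F < list_encode (map enc_form ps)" by (intro mem_lt_enc) simp
      also have "\<dots> \<le> enc_rule (ps, c)" unfolding enc_rule_split by (rule pr_ge1)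
      finally show ?thesis by simp
    next
      assume "F \<in> {c}"
      then show ?thesis unfolding enc_rule_split by (simp add: pr_ge2)
    qed
    then show "enc_form F < x" using er by simp
  qed
  then show "\<forall>(ps, c)\<in>set rls. \<forall>F\<in>set ps \<union> {c}. vars F \<subseteq> {..<Suc x}"
    using var_le_enc by (fastforce simp: less_Suc_eq_le)
qed

lemma iscov_sem:
  assumes x: "x = enc_input ar axs rls m" and W: "wf_calc ar axs rls" and m: "1 \<le> m"
  shows "iscov x (enc_code k) \<longleftrightarrow> is_cover ar m axs rls (logic_of_code k)"
proof -
  note d = input_dec[OF x]
  note cv = calc_vars[OF x]
  have A: "(\<forall>i<llen (AXc x). ctaut (enc_code k) (MMc x) (Suc x) (lnth (AXc x) i)) \<longleftrightarrow>
           (\<forall>a\<in>set axs. a \<in> Taut ar m (logic_of_code k))"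
  proof -
    have "(\<forall>i<llen (AXc x). ctaut (enc_code k) (MMc x) (Suc x) (lnth (AXc x) i)) \<longleftrightarrow>
          (\<forall>i<length axs. ctaut (enc_code k) m (Suc x) (enc_form (axs ! i)))"
      by (simp add: d)
    also have "\<dots> \<longleftrightarrow> (\<forall>a\<in>set axs. ctaut (enc_code k) m (Suc x) (enc_form a))"
      by (simp only: all_set_conv_all_nth)
    also have "\<dots> \<longleftrightarrow> (\<forall>a\<in>set axs. a \<in> Taut ar m (logic_of_code k))"
      using ctaut_sem[OF m] cv(1) W unfolding wf_calc_def Taut_def by auto
    finally show ?thesis .
  qed
  have B: "(\<forall>i<llen (RLc x). crule (enc_code k) (MMc x) (Suc x) (lnth (RLc x) i)) \<longleftrightarrow>
      (\<forall>(ps, c)\<in>set rls. \<forall>v. valuation m v \<longrightarrow> (\<forall>p\<in>set ps. satisfies (logic_of_code k) v p) \<longrightarrow>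
          satisfies (logic_of_code k) v c)"
  proof -
    have "(\<forall>i<llen (RLc x). crule (enc_code k) (MMc x) (Suc x) (lnth (RLc x) i)) \<longleftrightarrow>
          (\<forall>i<length rls. crule (enc_code k) m (Suc x) (enc_rule (rls ! i)))"
      by (simp add: d)
    also have "\<dots> \<longleftrightarrow> (\<forall>r\<in>set rls. crule (enc_code k) m (Suc x) (enc_rule r))"
      by (simp only: all_set_conv_all_nth)
    also have "\<dots> \<longleftrightarrow> (\<forall>(ps, c)\<in>set rls. \<forall>v. valuation m v \<longrightarrow> (\<forall>p\<in>set ps. satisfies (logic_of_code k) v p) \<longrightarrow>
          satisfies (logic_of_code k) v c)"
    proof -
      have "crule (enc_code k) m (Suc x) (enc_rule (ps, c)) \<longleftrightarrow>
        (\<forall>v. valuation m v \<longrightarrow> (\<forall>p\<in>set ps. satisfies (logic_of_code k) v p) \<longrightarrow> satisfies (logic_of_code k) v c)"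
        if "(ps, c) \<in> set rls" for ps c
        using crule_sem[OF m] cv(2) that by blast
      then show ?thesis by auto
    qed
    finally show ?thesis .
  qed
  show ?thesis unfolding iscov_def is_cover_def A B ..
qed

lemma goodc_sem:
  assumes x: "x = enc_input ar axs rls m" and W: "wf_calc ar axs rls" and m: "1 \<le> m"
  shows "goodc x (enc_code k) \<longleftrightarrow> is_logic ar m (logic_of_code k) \<and> is_cover ar m axs rls (logic_of_code k)"
  unfolding goodc_def islog_sem[OF x] iscov_sem[OF x W m] ..

lemma Taut_ctaut:
  assumes "1 \<le> m" "wf_form ar F" "vars F \<subseteq> {..<n}"
  shows "F \<in> Taut ar m (logic_of_code k) \<longleftrightarrow> ctaut (enc_code k) m n (enc_form F)"
  using ctaut_sem[OF assms(1,3)] assms(2) unfolding Taut_def by auto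

lemma incl_sem:
  assumes x: "x = enc_input ar axs rls m" and m: "1 \<le> m"
    and L1: "is_logic ar m (logic_of_code k1)" and L2: "is_logic ar m (logic_of_code k2)"
  shows "incl x (enc_code k1) (enc_code k2) \<longleftrightarrow> Taut ar m (logic_of_code k1) \<subseteq> Taut ar m (logic_of_code k2)"
proof
  note d = input_dec[OF x]
  assume I: "incl x (enc_code k1) (enc_code k2)"
  show "Taut ar m (logic_of_code k1) \<subseteq> Taut ar m (logic_of_code k2)"
    unfolding incl_reduce'[OF m L1 L2]
  proof (intro allI impI, elim conjE)
    fix F assume g: "good ar m ((m * m) ^ (m ^ m)) F" and T1: "F \<in> Taut ar m (logic_of_code k1)"
    have wf: "wf_form ar F" "vars F \<subseteq> {..<m}" using g by (auto simp: good_def)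
    have "enc_form F \<le> BFc x" using enc_bound[OF g] by (simp add: BFc_def d SLc_enc)
    moreover have "wfv (ARc x) (MMc x) (enc_form F) = 1" using wfv_iff wf d by auto
    moreover have "ctaut (enc_code k1) (MMc x) (MMc x) (enc_form F)"
      using T1 Taut_ctaut[OF m wf] d by simp
    ultimately have "ctaut (enc_code k2) (MMc x) (MMc x) (enc_form F)"
      using I unfolding incl_def by auto
    then show "F \<in> Taut ar m (logic_of_code k2)" using Taut_ctaut[OF m wf] d by simp
  qed
next
  note d = input_dec[OF x]
  assume S: "Taut ar m (logic_of_code k1) \<subseteq> Taut ar m (logic_of_code k2)"
  show "incl x (enc_code k1) (enc_code k2)"
    unfolding incl_def
  proof (intro allI impI, elim conjE)
    fix j assume "wfv (ARc x) (MMc x) j = 1" and c1: "ctaut (enc_code k1) (MMc x) (MMc x) j"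
    then obtain F where F: "j = enc_form F" "wf_form ar F" "vars F \<subseteq> {..<m}" using wfv_iff d by auto
    then have "F \<in> Taut ar m (logic_of_code k1)" using c1 Taut_ctaut[OF m F(2,3)] d by simp
    then have "F \<in> Taut ar m (logic_of_code k2)" using S by blast
    then show "ctaut (enc_code k2) (MMc x) (MMc x) j" using F Taut_ctaut[OF m F(2,3)] d by simp
  qed
qed

lemma minimal_sem:
  assumes x: "x = enc_input ar axs rls m" and W: "wf_calc ar axs rls" and m: "1 \<le> m"
  shows "minimal x (enc_code k) \<longleftrightarrow> minimal_cover ar m axs rls (logic_of_code k)"
proof
  note d = input_dec[OF x]
  assume M: "minimal x (enc_code k)"
  then have G: "is_logic ar m (logic_of_code k)" "is_cover ar m axs rls (logic_of_code k)"
    unfolding minimal_def goodc_sem[OF x W m] by auto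
  show "minimal_cover ar m axs rls (logic_of_code k)"
    unfolding minimal_cover_def
  proof (intro conjI G notI, elim exE conjE)
    fix M' assume L': "is_logic ar m M'" and C': "is_cover ar m axs rls M'" and lh: "lhd ar m M' (logic_of_code k)"
    let ?k' = "canon ar m M'"
    have S: "same_logic ar m M' (logic_of_code ?k')" by (rule canon_same[OF L'])
    have Lk': "is_logic ar m (logic_of_code ?k')" by (rule same_is_logic[OF L' S])
    have Ck': "is_cover ar m axs rls (logic_of_code ?k')" using same_cover[OF W L' S] C' by simp
    have T': "Taut ar m (logic_of_code ?k') = Taut ar m M'" using same_Taut[OF L' S] by simp
    have b: "enc_code ?k' < Suc (BLc x)"
      using canon_bound[OF L' m] by (simp add: BLc_def d SLc_enc)
    have "goodc x (enc_code ?k')" using goodc_sem[OF x W m] Lk' Ck' by simp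
    moreover have "incl x (enc_code ?k') (enc_code k)"
      using incl_sem[OF x m Lk' G(1)] T' lh by (simp add: lhd_def)
    moreover have "\<not> incl x (enc_code k) (enc_code ?k')"
      using incl_sem[OF x m G(1) Lk'] T' lh by (auto simp: lhd_def)
    ultimately show False using M b unfolding minimal_def by blast
  qed
next
  note d = input_dec[OF x]
  assume M: "minimal_cover ar m axs rls (logic_of_code k)"
  then have G: "is_logic ar m (logic_of_code k)" "is_cover ar m axs rls (logic_of_code k)"
    unfolding minimal_cover_def by auto
  show "minimal x (enc_code k)"
    unfolding minimal_def
  proof (intro conjI notI)
    show "goodc x (enc_code k)" using goodc_sem[OF x W m] G by simp
  next
    assume "\<exists>z'<Suc (BLc x). goodc x z' \<and> incl x z' (enc_code k) \<and> \<not> incl x (enc_code k) z'"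
    then obtain z' where z': "goodc x z'" "incl x z' (enc_code k)" "\<not> incl x (enc_code k) z'" by blast
    let ?k' = "dec_code z'"
    have gz: "goodc x (enc_code ?k')" using z'(1) by (simp add: enc_dec_code)
    have iz: "incl x (enc_code ?k') (enc_code k)" "\<not> incl x (enc_code k) (enc_code ?k')"
      using z'(2,3) by (simp_all add: enc_dec_code)
    have G': "is_logic ar m (logic_of_code ?k')" "is_cover ar m axs rls (logic_of_code ?k')"
      using gz goodc_sem[OF x W m] by auto
    have "lhd ar m (logic_of_code ?k') (logic_of_code k)"
      using iz incl_sem[OF x m G'(1) G(1)] incl_sem[OF x m G(1) G'(1)]
      unfolding lhd_def by auto
    then show False using M G' unfolding minimal_cover_def by blast
  qed
qed

theorem proposition6:
  shows "\<exists>p::recf. \<forall>ar axs rls m. wf_calc ar axs rls \<and> m \<ge> 1 \<longrightarrow>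
     (\<exists>ks::logic_code list.
        rf_eval p [enc_input ar axs rls m] (list_encode (map enc_code ks)) \<and>
        (\<forall>k\<in>set ks. minimal_cover ar m axs rls (logic_of_code k)) \<and>
        (\<forall>M. minimal_cover ar m axs rls M \<longrightarrow>
             (\<exists>k\<in>set ks. same_logic ar m M (logic_of_code k))))"
proof -
  obtain p where p: "\<forall>x. rf_eval p [x] (OUT x)" using c1_OUT unfolding c1_def by blast
  show ?thesis
  proof (rule exI[of _ p], intro allI impI)
    fix ar :: "nat list" and axs :: "form list" and rls :: "(form list \<times> form) list" and m :: nat
    assume a: "wf_calc ar axs rls \<and> m \<ge> 1"
    then have W: "wf_calc ar axs rls" and m: "1 \<le> m" by auto
    define x where "x = enc_input ar axs rls m"
    note d = input_dec[OF x_def]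
    define zs where "zs = rev (filter (\<lambda>z. minimal x z) [0..<Suc (BLc x)])"
    define ks where "ks = map dec_code zs"
    have mk: "map enc_code ks = zs" unfolding ks_def by (simp add: comp_def enc_dec_code)
    have "OUT x = list_encode zs" unfolding OUT_def zs_def by (simp add: lfilt_enc)
    then have "rf_eval p [enc_input ar axs rls m] (list_encode (map enc_code ks))"
      using p mk x_def by metis
    moreover have "\<forall>k\<in>set ks. minimal_cover ar m axs rls (logic_of_code k)"
    proof
      fix k assume "k \<in> set ks"
      then obtain z where z: "z \<in> set zs" "k = dec_code z" unfolding ks_def by auto
      then have "minimal x z" unfolding zs_def by (simp del: upt_Suc)
      then have "minimal x (enc_code k)" using z by (simp add: enc_dec_code)
      then show "minimal_cover ar m axs rls (logic_of_code k)" using minimal_sem[OF x_def W m] by simp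
    qed
    moreover have "\<forall>M. minimal_cover ar m axs rls M \<longrightarrow> (\<exists>k\<in>set ks. same_logic ar m M (logic_of_code k))"
    proof (intro allI impI)
      fix M assume MC: "minimal_cover ar m axs rls M"
      then have L: "is_logic ar m M" unfolding minimal_cover_def by simp
      let ?k = "canon ar m M"
      have S: "same_logic ar m M (logic_of_code ?k)" by (rule canon_same[OF L])
      have "minimal_cover ar m axs rls (logic_of_code ?k)" using same_minimal[OF W L S] MC by simp
      then have "minimal x (enc_code ?k)" using minimal_sem[OF x_def W m] by simp
      moreover have "enc_code ?k < Suc (BLc x)"
        using canon_bound[OF L m] by (simp add: BLc_def d SLc_enc)
      ultimately have "enc_code ?k \<in> set zs" unfolding zs_def by (simp del: upt_Suc)
      then have "?k \<in> set ks" unfolding ks_def using dec_enc_code by (metis image_eqI set_map)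
      then show "\<exists>k\<in>set ks. same_logic ar m M (logic_of_code k)" using S by blast
    qed
    ultimately show "\<exists>ks::logic_code list.
        rf_eval p [enc_input ar axs rls m] (list_encode (map enc_code ks)) \<and>
        (\<forall>k\<in>set ks. minimal_cover ar m axs rls (logic_of_code k)) \<and>
        (\<forall>M. minimal_cover ar m axs rls M \<longrightarrow>
             (\<exists>k\<in>set ks. same_logic ar m M (logic_of_code k)))" by blast
  qed
qed


end
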